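(* Let $N\ge1$, $K>0$, $r_1,\dots,r_N$ real numbers and $(\mu_{ij})_{1\le i,j\le N}$ a real matrix with $r_i>0$ for all $i$, $(\mu_{ij})$ nonnegative, symmetric and irreducible, and $\sum_{j=1}^N\mu_{ij}\le r_i/2$ for all $i$. Let $\alpha\in C^1_{loc}(\mathbb{R}^N,\mathbb{R})$ satisfy: $\alpha(0)=0$, $\alpha$ is monotone increasing with respect to the componentwise order, there exist positive $R,k,c$ with $c(\sum_j v_j)^k\le\alpha(v)$ for all $v\in[0,\infty)^N$ with $\sum_j|v_j|\ge R$, and $\nabla\alpha(x)>0$ (componentwise) for all $x\in\mathbb{R}^N$. Let $\psi_1,\dots,\psi_N\in C^1_{loc}(\mathbb{R}^N,\mathbb{R})$ be uniformly bounded, and for $\epsilon\ge0$ set $\Psi_i(v)=\alpha(v)+\epsilon\psi_i(v)$. Assume that for each such $\epsilon$ under consideration the functions $\Psi_i$ are locally Lipschitz, satisfy $\Psi_i(0)=0$, are monotone increasing for the componentwise order, and for each $i$ there exist positive $R_i,k_i,c_i$ with $c_i(\sum_jv_j)^{k_i}\le\Psi_i(v)$ for all $v\in[0,\infty)^N$ with $\sum_j|v_j|\ge R_i$. Then there exists $\epsilon_0>0$ such that for all $0\le\epsilon\le\epsilon_0$, the positive stationary solution $\bar v_\epsilon$ of $$\frac{dv_i}{dt}=v_i\left[r_i-\frac{1}{K}\Psi_i(v)\right]+\sum_{j=1}^N\mu_{ij}(v_j-v_i),\qquad i=1,\dots,N,$$ attracts all trajectories initiated from any nonzero nonnegative initial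 datum: for every $v(0)\in[0,\infty)^N$, $v(0)\neq0$, the solution satisfies $v(t)\to\bar v_\epsilon$ as $t\to\infty$.
   Context: A stationary solution is a vector with all components strictly positive (positive) at which the right-hand side of the system vanishes for every $i$; its existence under these assumptions is part of the setting. *)

theory Defs
  imports "HOL-Analysis.Analysis"
begin

definition comp_le :: "real ^ 'n \<Rightarrow> real ^ 'n \<Rightarrow> bool" where
  "comp_le x y \<longleftrightarrow> (\<forall>i. x $ i \<le> y $ i)"

definition comp_mono :: "(real ^ 'n \<Rightarrow> real) \<Rightarrow> bool" where
  "comp_mono f \<longleftrightarrow> (\<forall>x y. comp_le x y \<longrightarrow> f x \<le> f y)"

definition C1_grad :: "(real ^ 'n \<Rightarrow> real) \<Rightarrow> (real ^ 'n \<Rightarrow> real ^ 'n) \<Rightarrow> bool" where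
  "C1_grad f g \<longleftrightarrow> (\<forall>x. (f has_derivative (\<lambda>h. g x \<bullet> h)) (at x)) \<and> continuous_on UNIV g"

definition locally_lipschitz :: "(real ^ 'n \<Rightarrow> real) \<Rightarrow> bool" where
  "locally_lipschitz f \<longleftrightarrow> (\<forall>x. \<exists>\<delta>>0. \<exists>L. L-lipschitz_on (cball x \<delta>) f)"

definition growth_bound :: "(real ^ 'n \<Rightarrow> real) \<Rightarrow> bool" where
  "growth_bound f \<longleftrightarrow> (\<exists>R k c. R > 0 \<and> k > 0 \<and> c > 0 \<and>
     (\<forall>v. (\<forall>j. 0 \<le> v $ j) \<and> (\<Sum>j\<in>UNIV. \<bar>v $ j\<bar>) \<ge> R \<longrightarrow>
          c * (\<Sum>j\<in>UNIV. v $ j) powr k \<le> f v))"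

text \<open>Irreducibility of a nonnegative matrix: its directed graph (edge i -> j iff mu_ij > 0)
  is strongly connected. (Every 1x1 matrix is irreducible.)\<close>
definition irreducible_mat :: "real ^ 'n ^ 'n \<Rightarrow> bool" where
  "irreducible_mat mu \<longleftrightarrow> (\<forall>i j. i \<noteq> j \<longrightarrow> (i, j) \<in> {(a, b). mu $ a $ b > 0}\<^sup>+)"

definition sys_rhs :: "real ^ 'n \<Rightarrow> real \<Rightarrow> real ^ 'n ^ 'n \<Rightarrow> ('n \<Rightarrow> real ^ 'n \<Rightarrow> real)
    \<Rightarrow> real ^ 'n \<Rightarrow> real ^ 'n" where
  "sys_rhs r K mu Psi v = (\<chi> i. v $ i * (r $ i - Psi i v / K) + (\<Sum>j\<in>UNIV. mu $ i $ j * (v $ j - v $ i)))"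

end

theory Submission
  imports Defs
begin


definition Dmat :: "real^'n \<Rightarrow> real^'n^'n \<Rightarrow> real^'n^'n" where
  "Dmat r mu = (\<chi> i j. (if i = j then r$i - (\<Sum>k\<in>UNIV. mu$i$k) else 0) + mu$i$j)"

lemma Dmat_apply:
  "(Dmat r mu *v x) $ i = r$i * x$i + (\<Sum>j\<in>UNIV. mu$i$j * (x$j - x$i))"
proof -
  have "(Dmat r mu *v x) $ i = (\<Sum>j\<in>UNIV. ((if i = j then r$i - (\<Sum>k\<in>UNIV. mu$i$k) else 0) + mu$i$j) * x$j)"
    by (simp add: Dmat_def matrix_vector_mult_def)
  also have "\<dots> = (r$i - (\<Sum>k\<in>UNIV. mu$i$k)) * x$i + (\<Sum>j\<in>UNIV. mu$i$j * x$j)"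
  proof -
    have "\<And>j. ((if i = j then r$i - (\<Sum>k\<in>UNIV. mu$i$k) else 0) + mu$i$j) * x$j
       = (if i = j then (r$i - (\<Sum>k\<in>UNIV. mu$i$k)) * x$j else 0) + mu$i$j * x$j"
      by (simp add: distrib_right)
    then show ?thesis by (simp add: sum.distrib)
  qed
  also have "\<dots> = r$i * x$i + (\<Sum>j\<in>UNIV. mu$i$j * (x$j - x$i))"
    by (simp add: right_diff_distrib sum_subtractf sum_distrib_right left_diff_distrib)
  finally show ?thesis .
qed

lemma Dmat_offdiag: "i \<noteq> j \<Longrightarrow> Dmat r mu $ i $ j = mu $ i $ j"
  by (simp add: Dmat_def)

lemma sys_rhs_eq: "sys_rhs r K mu Psi v = Dmat r mu *v v - (\<chi> i. v$i * Psi i v / K)"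
  by (simp add: vec_eq_iff sys_rhs_def Dmat_apply algebra_simps)

lemma Dmat_sym: assumes "\<forall>i j. mu$i$j = mu$j$i" shows "transpose (Dmat r mu) = Dmat r mu"
  using assms by (simp add: vec_eq_iff transpose_def Dmat_def)

lemma sym_inner: assumes "transpose A = A"
  shows "x \<bullet> ((A::real^'n^'n) *v y) = (A *v x) \<bullet> y"
proof -
  have "x \<bullet> (A *v y) = (x v* A) \<bullet> y" by (simp add: dot_lmul_matrix)
  also have "x v* A = A *v x" using vector_transpose_matrix[of x A] assms by simp
  finally show ?thesis .
qed

lemma quad_expand: "x \<bullet> ((A::real^'n^'n) *v y) = (\<Sum>i\<in>UNIV. \<Sum>j\<in>UNIV. A$i$j * x$i * y$j)"
  by (simp add: inner_vec_def matrix_vector_mult_def sum_distrib_left mult_ac)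

lemma quad_abs:
  assumes "\<forall>i j. mu$i$j \<ge> 0"
  shows "x \<bullet> (Dmat r mu *v x) \<le> (\<chi> i. \<bar>x$i\<bar>) \<bullet> (Dmat r mu *v (\<chi> i. \<bar>x$i\<bar>))"
  unfolding quad_expand
proof (intro sum_mono)
  fix i j
  show "Dmat r mu $ i $ j * x $ i * x $ j \<le> Dmat r mu $ i $ j * (\<chi> i. \<bar>x $ i\<bar>) $ i * (\<chi> i. \<bar>x $ i\<bar>) $ j"
  proof (cases "i = j")
    case True then show ?thesis by (simp add: abs_mult_self_eq)
  next
    case False
    have "x$i * x$j \<le> \<bar>x$i\<bar> * \<bar>x$j\<bar>" by (metis abs_ge_self abs_mult)
    then show ?thesis using False assms Dmat_offdiag[OF False, of r mu]
      by (simp add: mult.assoc mult_left_mono)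
  qed
qed

lemma quad_scale: "(c *\<^sub>R x) \<bullet> ((A::real^'n^'n) *v (c *\<^sub>R x)) = c^2 * (x \<bullet> (A *v x))"
  by (simp add: matrix_vector_mult_scaleR power2_eq_square)

lemma max_eig:
  fixes A :: "real^'n^'n"
  assumes sym: "transpose A = A"
    and bd: "\<forall>x. x \<bullet> (A *v x) \<le> lam * (norm x)^2"
    and eq: "y \<bullet> (A *v y) = lam * (norm y)^2"
  shows "A *v y = lam *\<^sub>R y"
proof (rule ccontr)
  assume ne: "A *v y \<noteq> lam *\<^sub>R y"
  define e where "e = A *v y - lam *\<^sub>R y"
  define n where "n = e \<bullet> e"
  have npos: "n > 0" using ne by (simp add: n_def e_def)
  define c where "c = e \<bullet> (A *v e) - lam * (norm e)^2"
  have cle: "c \<le> 0" using bd by (simp add: c_def)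
  define t where "t = n / (1 - c)"
  have tpos: "t > 0" using npos cle by (simp add: t_def)
  have key: "(y + t *\<^sub>R e) \<bullet> (A *v (y + t *\<^sub>R e)) \<le> lam * (norm (y + t *\<^sub>R e))^2"
    using bd by blast
  have s1: "y \<bullet> (A *v e) = e \<bullet> (A *v y)" using sym_inner[OF sym, of y e] by (simp add: inner_commute)
  have lhs: "(y + t *\<^sub>R e) \<bullet> (A *v (y + t *\<^sub>R e)) = y \<bullet> (A *v y) + 2 * t * (e \<bullet> (A *v y)) + t^2 * (e \<bullet> (A *v e))"
    using s1 by (simp add: matrix_vector_right_distrib matrix_vector_mult_scaleR inner_add_left inner_add_right power2_eq_square algebra_simps)
  have rhs: "(norm (y + t *\<^sub>R e))^2 = (norm y)^2 + 2 * t * (e \<bullet> y) + t^2 * (norm e)^2"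
    by (simp only: power2_norm_eq_inner) (simp add: inner_add_left inner_add_right inner_commute[of e y] power2_eq_square algebra_simps)
  have ee: "e \<bullet> (A *v y) - lam * (e \<bullet> y) = n"
    by (simp add: n_def e_def inner_diff_right algebra_simps)
  have "2 * t * (e \<bullet> (A *v y) - lam * (e \<bullet> y)) + t^2 * c \<le> 0"
    using key lhs rhs eq by (simp add: c_def algebra_simps)
  then have "2 * t * n + t * (t * c) \<le> 0" using ee by (simp add: power2_eq_square algebra_simps)
  then have "t * (2 * n + t * c) \<le> 0" by (simp add: algebra_simps)
  then have "2 * n + t * c \<le> 0" using tpos by (simp add: mult_le_0_iff)
  moreover have "t * c + n = n / (1 - c)" using cle by (simp add: t_def field_simps)
  moreover have "n / (1 - c) > 0" using npos cle by simp
  ultimately show False using npos by linarith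
qed



lemma eig_zero_prop:
  assumes mu_nonneg: "\<forall>i j. mu$i$j \<ge> 0"
    and ynn: "\<forall>i. y$i \<ge> 0" and eig: "Dmat r mu *v y = lam *\<^sub>R y"
    and yi: "y$i = 0" and mij: "mu$i$j > 0"
  shows "y$j = 0"
proof -
  have "(Dmat r mu *v y) $ i = 0" using eig yi by simp
  then have "(\<Sum>k\<in>UNIV. mu$i$k * y$k) = 0" using yi by (simp add: Dmat_apply)
  then have "\<forall>k\<in>UNIV. mu$i$k * y$k = 0"
    by (subst sum_nonneg_eq_0_iff[symmetric]) (auto simp: mu_nonneg ynn)
  then have "mu$i$j * y$j = 0" by blast
  then show ?thesis using mij by simp
qed

lemma eig_pos:
  assumes mu_nonneg: "\<forall>i j. mu$i$j \<ge> 0" and irr: "irreducible_mat mu"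
    and ynn: "\<forall>i. y$i \<ge> 0" and eig: "Dmat r mu *v y = lam *\<^sub>R y" and yne: "y \<noteq> 0"
  shows "\<forall>i. y$i > 0"
proof (rule ccontr)
  assume "\<not> (\<forall>i. y$i > 0)"
  then obtain i where yi: "y$i = 0" using ynn by (metis less_eq_real_def)
  have reach: "y$j = 0" if "(i, j) \<in> {(a, b). mu $ a $ b > 0}\<^sup>+" for j
    using that
  proof (induction rule: trancl_induct)
    case (base b) then show ?case using eig_zero_prop[OF mu_nonneg ynn eig yi] by auto
  next
    case (step b c) then show ?case using eig_zero_prop[OF mu_nonneg ynn eig, of b c] by auto
  qed
  have "y$j = 0" for j
    using reach irr yi unfolding irreducible_mat_def by (cases "i = j") auto
  then have "y = 0" by (simp add: vec_eq_iff)
  then show False using yne by simp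
qed

lemma quad_ones: "(\<chi> i. (1::real)) \<bullet> (Dmat r mu *v (\<chi> i. 1)) = (\<Sum>i\<in>UNIV. r$i)"
  by (simp add: inner_vec_def Dmat_apply)

lemma norm_absvec: "norm (\<chi> i. \<bar>(x::real^'n)$i\<bar>) = norm x"
  by (simp add: norm_vec_def)

lemma quad_bound_scale:
  fixes A :: "real^'n^'n" and S :: "(real^'n) set"
  assumes "\<forall>y. norm y = 1 \<and> P y \<longrightarrow> y \<bullet> (A *v y) \<le> c"
    and "\<forall>x t. P x \<longrightarrow> P (t *\<^sub>R x)"
    and "P x"
  shows "x \<bullet> (A *v x) \<le> c * (norm x)^2"
proof (cases "x = 0")
  case True then show ?thesis by simp
next
  case False
  define y where "y = (1 / norm x) *\<^sub>R x"
  have "norm y = 1" using False by (simp add: y_def)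
  moreover have "P y" using assms(2,3) by (simp add: y_def)
  ultimately have "y \<bullet> (A *v y) \<le> c" using assms(1) by blast
  moreover have "y \<bullet> (A *v y) = (x \<bullet> (A *v x)) / (norm x)^2"
    unfolding y_def quad_scale by (simp add: power_divide)
  ultimately show ?thesis using False by (simp add: divide_le_eq)
qed

lemma perron:
  fixes r :: "real^'n" and mu :: "real^'n^'n"
  assumes mu_nonneg: "\<forall>i j. mu$i$j \<ge> 0" and mu_sym: "\<forall>i j. mu$i$j = mu$j$i"
    and irr: "irreducible_mat mu" and r_pos: "\<forall>i. r$i > 0"
  obtains phi lam gap where "\<forall>i. phi$i > 0" "norm phi = 1" "Dmat r mu *v phi = lam *\<^sub>R phi"
     "lam > 0" "gap > 0" "\<forall>x. x \<bullet> (Dmat r mu *v x) \<le> lam * (norm x)^2"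
     "\<forall>x. phi \<bullet> x = 0 \<longrightarrow> x \<bullet> (Dmat r mu *v x) \<le> (lam - gap) * (norm x)^2"
proof -
  let ?A = "Dmat r mu"
  let ?Q = "\<lambda>x. x \<bullet> (?A *v x)"
  have sym: "transpose ?A = ?A" using Dmat_sym[OF mu_sym] .
  have contQ: "continuous_on S ?Q" for S
    by (rule continuous_on_inner[OF continuous_on_id matrix_vector_mult_linear_continuous_on])
  obtain x0 where x0: "x0 \<in> sphere 0 1" "\<forall>y\<in>sphere 0 1. ?Q y \<le> ?Q x0"
  proof -
    obtain z :: "real^'n" where "norm z = 1" using vector_choose_size[of 1] by auto
    then have "sphere (0::real^'n) 1 \<noteq> {}" by auto
    then show ?thesis using continuous_attains_sup[OF compact_sphere _ contQ] that by blast
  qed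
  define lam where "lam = ?Q x0"
  have glob: "\<forall>x. ?Q x \<le> lam * (norm x)^2"
    using quad_bound_scale[of "\<lambda>_. True" ?A lam] x0 by (auto simp: lam_def)
  define phi where "phi = (\<chi> i. \<bar>x0$i\<bar>)"
  have nphi: "norm phi = 1" using x0 by (simp add: phi_def norm_absvec)
  have "?Q phi \<ge> lam" unfolding phi_def lam_def by (rule quad_abs[OF mu_nonneg])
  then have "?Q phi = lam * (norm phi)^2" using glob[rule_format, of phi] nphi by simp
  then have eigphi: "?A *v phi = lam *\<^sub>R phi" using max_eig[OF sym glob] by blast
  have phinn: "\<forall>i. phi$i \<ge> 0" by (simp add: phi_def)
  have phipos: "\<forall>i. phi$i > 0"
  proof -
    have "phi \<noteq> 0" using nphi by auto
    then show ?thesis using eig_pos[OF mu_nonneg irr phinn eigphi] by blast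
  qed
  have lampos: "lam > 0"
  proof -
    have "0 < (\<Sum>i\<in>UNIV. r$i)" using r_pos by (simp add: sum_pos)
    also have "\<dots> \<le> lam * (norm ((\<chi> i. 1) :: real^'n))^2" using glob[rule_format, of "\<chi> i. (1::real)"] quad_ones[of r mu] by simp
    finally show ?thesis by (simp add: zero_less_mult_iff)
  qed
  have "\<exists>gap>0. \<forall>x. phi \<bullet> x = 0 \<longrightarrow> ?Q x \<le> (lam - gap) * (norm x)^2"
  proof (cases "sphere 0 1 \<inter> {x. phi \<bullet> x = 0} = {}")
    case True
    have none: "\<forall>y. norm y = 1 \<and> phi \<bullet> y = 0 \<longrightarrow> ?Q y \<le> lam - 1"
    proof (intro allI impI)
      fix y :: "real^'n" assume "norm y = 1 \<and> phi \<bullet> y = 0"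
      then have "y \<in> sphere 0 1 \<inter> {x. phi \<bullet> x = 0}" by simp
      then show "?Q y \<le> lam - 1" using True by blast
    qed
    have "?Q x \<le> (lam - 1) * (norm x)^2" if "phi \<bullet> x = 0" for x
      using quad_bound_scale[of "\<lambda>x. phi \<bullet> x = 0" ?A "lam - 1" x] none that by auto
    then show ?thesis by (intro exI[of _ 1]) auto
  next
    case False
    have cT: "compact (sphere 0 1 \<inter> {x. phi \<bullet> x = 0})"
      by (intro compact_Int_closed compact_sphere closed_hyperplane)
    obtain y0 where y0: "y0 \<in> sphere 0 1 \<inter> {x. phi \<bullet> x = 0}"
      "\<forall>y\<in>sphere 0 1 \<inter> {x. phi \<bullet> x = 0}. ?Q y \<le> ?Q y0"
      using continuous_attains_sup[OF cT False contQ] by blast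
    have "?Q y0 < lam"
    proof (rule ccontr)
      assume "\<not> ?Q y0 < lam"
      then have q0: "?Q y0 = lam * (norm y0)^2" using glob[rule_format, of y0] y0 by auto
      then have eig0: "?A *v y0 = lam *\<^sub>R y0" using max_eig[OF sym glob] by blast
      define ya where "ya = (\<chi> i. \<bar>y0$i\<bar>)"
      have "?Q ya \<ge> ?Q y0" unfolding ya_def by (rule quad_abs[OF mu_nonneg])
      then have "?Q ya = lam * (norm ya)^2" using glob[rule_format, of ya] q0
        by (simp add: ya_def norm_absvec)
      then have eiga: "?A *v ya = lam *\<^sub>R ya" using max_eig[OF sym glob] by blast
      define yp where "yp = (1/2) *\<^sub>R (ya + y0)"
      have eigp: "?A *v yp = lam *\<^sub>R yp"
        using eiga eig0 by (simp add: yp_def matrix_vector_mult_scaleR matrix_vector_right_distrib algebra_simps)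
      have ypnn: "\<forall>i. yp$i \<ge> 0" by (simp add: yp_def ya_def) (metis abs_ge_minus_self add.commute le_add_same_cancel1 neg_le_iff_le add_le_cancel_left abs_minus_cancel diff_ge_0_iff_ge diff_minus_eq_add)
      have y0ne: "y0 \<noteq> 0" using y0 by auto
      have orth: "(\<Sum>i\<in>UNIV. phi$i * y0$i) = 0" using y0 by (simp add: inner_vec_def)
      have exneg: "\<exists>i. y0$i < 0"
      proof (rule ccontr)
        assume "\<not> (\<exists>i. y0$i < 0)"
        then have nn: "\<forall>i. y0$i \<ge> 0" by (simp add: not_less)
        then have "\<forall>i\<in>UNIV. phi$i * y0$i = 0"
          using orth by (subst sum_nonneg_eq_0_iff[symmetric]) (auto simp: phinn)
        then have "y0 = 0" using phipos by (simp add: vec_eq_iff) (metis less_irrefl)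
        then show False using y0ne by simp
      qed
      have expos: "\<exists>i. y0$i > 0"
      proof (rule ccontr)
        assume "\<not> (\<exists>i. y0$i > 0)"
        then have nn: "\<forall>i. - y0$i \<ge> 0" by (simp add: not_less)
        have "(\<Sum>i\<in>UNIV. phi$i * (- y0$i)) = 0" using orth by (simp add: sum_negf)
        then have "\<forall>i\<in>UNIV. phi$i * (- y0$i) = 0"
          using phinn nn by (subst sum_nonneg_eq_0_iff[symmetric]) (auto intro: mult_nonneg_nonpos)
        then have "y0 = 0" using phipos by (simp add: vec_eq_iff) (metis less_irrefl)
        then show False using y0ne by simp
      qed
      obtain j where j: "y0$j > 0" using expos by blast
      have "yp$j \<noteq> 0" using j by (simp add: yp_def ya_def)
      then have "yp \<noteq> 0" by auto
      then have "\<forall>i. yp$i > 0" using eig_pos[OF mu_nonneg irr ypnn eigp] by blast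
      moreover obtain i where "y0$i < 0" using exneg by blast
      then have "yp$i = 0" by (simp add: yp_def ya_def)
      ultimately show False by (metis less_irrefl)
    qed
    define gap where "gap = lam - ?Q y0"
    have "?Q x \<le> (lam - gap) * (norm x)^2" if "phi \<bullet> x = 0" for x
      using quad_bound_scale[of "\<lambda>x. phi \<bullet> x = 0" ?A "?Q y0" x] y0 that by (auto simp: gap_def)
    moreover have "gap > 0" using \<open>?Q y0 < lam\<close> by (simp add: gap_def)
    ultimately show ?thesis by blast
  qed
  then obtain gap where "gap > 0" "\<forall>x. phi \<bullet> x = 0 \<longrightarrow> ?Q x \<le> (lam - gap) * (norm x)^2" by blast
  then show ?thesis using that phipos nphi eigphi lampos glob by blast
qed



definition nn :: "real^'n \<Rightarrow> bool" where "nn v \<longleftrightarrow> (\<forall>i. 0 \<le> v$i)"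

locale sysloc =
  fixes K :: real and r :: "real^'n" and mu :: "real^'n^'n"
    and alpha :: "real^'n \<Rightarrow> real" and ga :: "real^'n \<Rightarrow> real^'n"
    and psi :: "'n \<Rightarrow> real^'n \<Rightarrow> real" and gpsi :: "'n \<Rightarrow> real^'n \<Rightarrow> real^'n"
    and B :: real and phi :: "real^'n" and lam gap :: real
  assumes K_pos: "K > 0"
    and r_pos: "\<And>i. r$i > 0"
    and mu_nonneg: "\<And>i j. mu$i$j \<ge> 0"
    and mu_sym: "\<And>i j. mu$i$j = mu$j$i"
    and alpha_der: "\<And>x. (alpha has_derivative (\<lambda>h. ga x \<bullet> h)) (at x)"
    and ga_cont: "continuous_on UNIV ga"
    and ga_pos: "\<And>x i. ga x $ i > 0"
    and alpha_0: "alpha 0 = 0"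
    and growth: "growth_bound alpha"
    and psi_der: "\<And>i x. (psi i has_derivative (\<lambda>h. gpsi i x \<bullet> h)) (at x)"
    and gpsi_cont: "\<And>i. continuous_on UNIV (gpsi i)"
    and psi_bdd: "\<And>i x. \<bar>psi i x\<bar> \<le> B"
    and phi_pos: "\<And>i. phi$i > 0" and phi_norm: "norm phi = 1"
    and phi_eig: "Dmat r mu *v phi = lam *\<^sub>R phi"
    and lam_pos: "lam > 0" and gap_pos: "gap > 0"
    and gap_bd: "\<And>x. phi \<bullet> x = 0 \<Longrightarrow> x \<bullet> (Dmat r mu *v x) \<le> (lam - gap) * (norm x)^2"
begin

lemma B_nonneg: "0 \<le> B" using psi_bdd[of undefined 0] by linarith

lemma alpha_isCont: "isCont alpha x"
  using has_derivative_continuous[OF alpha_der] .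

lemma psi_isCont: "isCont (psi i) x"
  using has_derivative_continuous[OF psi_der] .

lemma alpha_cont: "continuous_on S alpha"
  by (simp add: alpha_isCont continuous_at_imp_continuous_on)

lemma psi_cont: "continuous_on S (psi i)"
  by (simp add: psi_isCont continuous_at_imp_continuous_on)

definition F :: "real \<Rightarrow> real^'n \<Rightarrow> real^'n" where
  "F e v = sys_rhs r K mu (\<lambda>i v. alpha v + e * psi i v) v"

definition Gv :: "real^'n \<Rightarrow> real^'n" where
  "Gv v = (\<chi> i. psi i v * v$i)"

lemma F_eq: "F e v = Dmat r mu *v v - (alpha v / K) *\<^sub>R v - (e / K) *\<^sub>R Gv v"
  unfolding F_def sys_rhs_eq using K_pos by (simp add: vec_eq_iff Gv_def field_simps)

lemma Dsym: "transpose (Dmat r mu) = Dmat r mu"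
  using Dmat_sym mu_sym by blast

lemma phi_D: "phi \<bullet> (Dmat r mu *v x) = lam * (phi \<bullet> x)"
  using sym_inner[OF Dsym, of phi x] phi_eig by simp

lemma phi_F: "phi \<bullet> F e v = lam * (phi \<bullet> v) - (alpha v / K) * (phi \<bullet> v) - (e / K) * (phi \<bullet> Gv v)"
  unfolding F_eq by (simp add: inner_diff_right phi_D)

definition phimin where "phimin = Min (range (\<lambda>i. phi$i))"

lemma phimin_pos: "phimin > 0"
  unfolding phimin_def by (simp add: phi_pos)

lemma phimin_le: "phimin \<le> phi$i"
  unfolding phimin_def by simp

lemma phi_le1: "phi$i \<le> 1"
  using component_le_norm_cart[of phi i] phi_norm by simp

definition Qc where "Qc = real CARD('n) / phimin"

lemma Qc_pos: "Qc > 0" unfolding Qc_def using phimin_pos by simp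

lemma inner_phi: "phi \<bullet> v = (\<Sum>i\<in>UNIV. phi$i * v$i)"
  by (simp add: inner_vec_def)

lemma p_nonneg: "nn v \<Longrightarrow> phi \<bullet> v \<ge> 0"
  unfolding inner_phi nn_def by (intro sum_nonneg) (simp add: phi_pos less_imp_le)

lemma comp_le_p: assumes "nn v" shows "phimin * v$i \<le> phi \<bullet> v"
proof -
  have "phimin * v$i \<le> phi$i * v$i" using assms phimin_le by (simp add: nn_def mult_right_mono)
  also have "\<dots> \<le> (\<Sum>j\<in>UNIV. phi$j * v$j)"
    by (rule member_le_sum) (use assms phi_pos in \<open>auto simp: nn_def less_imp_le\<close>)
  finally show ?thesis by (simp add: inner_phi)
qed

lemma norm_le_Qc: assumes "nn v" shows "norm v \<le> Qc * (phi \<bullet> v)"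
proof -
  have "norm v \<le> (\<Sum>i\<in>UNIV. \<bar>v$i\<bar>)" by (rule norm_le_l1_cart)
  also have "\<dots> \<le> (\<Sum>i\<in>(UNIV::'n set). (phi \<bullet> v) / phimin)"
  proof (rule sum_mono)
    fix i
    have "phimin * v$i \<le> phi \<bullet> v" by (rule comp_le_p[OF assms])
    then have "v$i \<le> (phi \<bullet> v) / phimin" using phimin_pos by (simp add: pos_le_divide_eq mult.commute)
    then show "\<bar>v$i\<bar> \<le> (phi \<bullet> v) / phimin" using assms by (simp add: nn_def)
  qed
  also have "\<dots> = Qc * (phi \<bullet> v)" by (simp add: Qc_def)
  finally show ?thesis .
qed

lemma p_le_sum: assumes "nn v" shows "phi \<bullet> v \<le> (\<Sum>i\<in>UNIV. v$i)"
  unfolding inner_phi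
proof (intro sum_mono)
  fix i show "phi$i * v$i \<le> v$i" using mult_right_mono[of "phi$i" 1 "v$i"] phi_le1[of i] assms by (simp add: nn_def)
qed

lemma p_pos: assumes "nn v" "v \<noteq> 0" shows "phi \<bullet> v > 0"
proof -
  obtain i where "v$i \<noteq> 0" using assms(2) by (auto simp: vec_eq_iff)
  then have "v$i > 0" using assms(1) by (simp add: nn_def less_le)
  then have "0 < phimin * v$i" using phimin_pos by simp
  then show ?thesis using comp_le_p[OF assms(1), of i] by linarith
qed

lemma phiGv_bd: assumes "nn v" shows "\<bar>phi \<bullet> Gv v\<bar> \<le> B * (phi \<bullet> v)"
proof -
  have "\<bar>phi \<bullet> Gv v\<bar> \<le> (\<Sum>i\<in>UNIV. \<bar>phi$i * (psi i v * v$i)\<bar>)"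
    by (simp add: inner_vec_def Gv_def sum_abs del: abs_mult)
  also have "\<dots> \<le> (\<Sum>i\<in>UNIV. B * (phi$i * v$i))"
  proof (intro sum_mono)
    fix i
    have "\<bar>phi$i * (psi i v * v$i)\<bar> = \<bar>psi i v\<bar> * (phi$i * v$i)"
      using assms phi_pos[of i] by (simp add: nn_def abs_mult)
    also have "\<dots> \<le> B * (phi$i * v$i)"
      using psi_bdd assms phi_pos[of i] by (intro mult_right_mono) (auto simp: nn_def)
    finally show "\<bar>phi$i * (psi i v * v$i)\<bar> \<le> B * (phi$i * v$i)" .
  qed
  also have "\<dots> = B * (phi \<bullet> v)" by (simp add: inner_phi sum_distrib_left)
  finally show ?thesis .
qed

end


lemma lipschitz_from_grad:
  fixes f :: "real^'n \<Rightarrow> real"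
  assumes der: "\<And>x. (f has_derivative (\<lambda>h. g x \<bullet> h)) (at x)" and gc: "continuous_on UNIV g"
  shows "\<exists>A\<ge>0. \<forall>x\<in>cball 0 R. \<forall>y\<in>cball 0 R. \<bar>f x - f y\<bar> \<le> A * norm (x - y)"
proof -
  have "compact (g ` cball 0 R)"
    by (intro compact_continuous_image continuous_on_subset[OF gc] compact_cball) auto
  then obtain A where A: "A > 0" "\<forall>z\<in>g ` cball 0 R. norm z \<le> A"
    using compact_imp_bounded bounded_pos by metis
  have "\<bar>f x - f y\<bar> \<le> A * norm (x - y)" if "x \<in> cball 0 R" "y \<in> cball 0 R" for x y
  proof -
    have "norm (f x - f y) \<le> A * norm (x - y)"
    proof (rule differentiable_bound[OF convex_cball _ _ that])
      fix z assume "z \<in> cball (0::real^'n) R"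
      show "(f has_derivative (\<lambda>h. g z \<bullet> h)) (at z within cball 0 R)"
        using has_derivative_subset[OF der subset_UNIV] .
      have "onorm (\<lambda>h. g z \<bullet> h) \<le> norm (g z) * onorm (\<lambda>h::real^'n. h)"
        by (rule onorm_inner_right) simp
      also have "\<dots> \<le> A" using A \<open>z \<in> cball 0 R\<close> by (simp add: onorm_id)
      finally show "onorm (\<lambda>h. g z \<bullet> h) \<le> A" .
    qed
    then show ?thesis by simp
  qed
  then show ?thesis using A by (intro exI[of _ A]) auto
qed

context sysloc begin

lemma exists_a: "\<exists>a>0. a \<le> 1 \<and> (\<forall>v. nn v \<and> phi \<bullet> v < a \<longrightarrow> alpha v \<le> K * lam / 4)"
proof -
  have "K * lam / 4 > 0" using K_pos lam_pos by simp
  then obtain d where d: "d > 0" "\<forall>x. dist x 0 < d \<longrightarrow> dist (alpha x) (alpha 0) < K * lam / 4"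
    using alpha_isCont[of 0] unfolding continuous_at_eps_delta by blast
  define a where "a = min 1 (d / (Qc + 1))"
  have apos: "a > 0" using d Qc_pos by (simp add: a_def)
  have "alpha v \<le> K * lam / 4" if "nn v" "phi \<bullet> v < a" for v
  proof -
    have "norm v \<le> Qc * (phi \<bullet> v)" by (rule norm_le_Qc[OF that(1)])
    also have "\<dots> \<le> Qc * a" using that Qc_pos by simp
    also have "\<dots> \<le> Qc * (d / (Qc + 1))"
    proof -
      have "a \<le> d / (Qc + 1)" by (simp add: a_def)
      then show ?thesis using mult_left_mono[of a "d / (Qc + 1)" Qc] Qc_pos by simp
    qed
    also have "\<dots> < d" using Qc_pos d by (simp add: field_simps)
    finally have "dist v 0 < d" by simp
    then show ?thesis using d alpha_0 by (auto simp: dist_real_def)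
  qed
  then show ?thesis using apos by (intro exI[of _ a]) (auto simp: a_def)
qed

lemma exists_b: "\<exists>b\<ge>1. \<forall>v. nn v \<and> phi \<bullet> v \<ge> b \<longrightarrow> alpha v \<ge> 2 * K * lam"
proof -
  obtain R k c where Rkc: "R > 0" "k > 0" "c > 0"
    "\<forall>v. (\<forall>j. 0 \<le> v $ j) \<and> (\<Sum>j\<in>UNIV. \<bar>v $ j\<bar>) \<ge> R \<longrightarrow> c * (\<Sum>j\<in>UNIV. v $ j) powr k \<le> alpha v"
    using growth unfolding growth_bound_def by blast
  define b where "b = max 1 (max R ((2 * K * lam / c) powr (1 / k)))"
  have "alpha v \<ge> 2 * K * lam" if "nn v" "phi \<bullet> v \<ge> b" for v
  proof -
    have s: "(\<Sum>j\<in>UNIV. v$j) \<ge> b" using p_le_sum[OF that(1)] that(2) by linarith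
    have "(\<Sum>j\<in>UNIV. \<bar>v $ j\<bar>) = (\<Sum>j\<in>UNIV. v $ j)" using that(1) by (simp add: nn_def)
    then have "(\<Sum>j\<in>UNIV. \<bar>v $ j\<bar>) \<ge> R" using s by (simp add: b_def)
    then have ca: "c * (\<Sum>j\<in>UNIV. v $ j) powr k \<le> alpha v" using Rkc(4) that(1) by (auto simp: nn_def)
    have "2 * K * lam / c = ((2 * K * lam / c) powr (1 / k)) powr k"
      using Rkc K_pos lam_pos by (simp add: powr_powr)
    also have "\<dots> \<le> (\<Sum>j\<in>UNIV. v $ j) powr k"
      using s Rkc by (intro powr_mono2) (auto simp: b_def)
    finally have "2 * K * lam \<le> c * (\<Sum>j\<in>UNIV. v $ j) powr k"
      using Rkc by (simp add: pos_divide_le_eq mult.commute)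
    then show ?thesis using ca by linarith
  qed
  then show ?thesis by (intro exI[of _ b]) (auto simp: b_def)
qed

lemma exists_A: "\<exists>A\<ge>0. \<forall>x\<in>cball 0 R. \<forall>y\<in>cball 0 R. \<bar>alpha x - alpha y\<bar> \<le> A * norm (x - y)"
  by (rule lipschitz_from_grad[OF alpha_der ga_cont])

lemma exists_Lp: "\<exists>L\<ge>0. \<forall>i. \<forall>x\<in>cball 0 R. \<forall>y\<in>cball 0 R. \<bar>psi i x - psi i y\<bar> \<le> L * norm (x - y)"
proof -
  have "\<forall>i. \<exists>L\<ge>0. \<forall>x\<in>cball 0 R. \<forall>y\<in>cball 0 R. \<bar>psi i x - psi i y\<bar> \<le> L * norm (x - y)"
    using lipschitz_from_grad[OF psi_der gpsi_cont] by blast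
  then obtain Lf where Lf: "\<And>i. Lf i \<ge> 0" "\<And>i. \<forall>x\<in>cball 0 R. \<forall>y\<in>cball 0 R. \<bar>psi i x - psi i y\<bar> \<le> Lf i * norm (x - y)"
    by metis
  define L where "L = (\<Sum>i\<in>UNIV. Lf i)"
  have LL: "Lf i \<le> L" for i unfolding L_def by (rule member_le_sum) (auto simp: Lf)
  have "\<bar>psi i x - psi i y\<bar> \<le> L * norm (x - y)" if "x\<in>cball 0 R" "y\<in>cball 0 R" for i x y
    using Lf(2)[of i] that LL[of i] by (meson mult_right_mono norm_ge_zero order_trans)
  moreover have "L \<ge> 0" unfolding L_def by (simp add: Lf sum_nonneg)
  ultimately show ?thesis by blast
qed

definition Simp :: "(real^'n) set" where "Simp = {q. nn q \<and> phi \<bullet> q = 1}"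

lemma Simp_compact: "compact Simp"
proof -
  have c1: "closed {q::real^'n. \<forall>i. 0 \<le> q$i}"
    by (intro closed_Collect_all closed_Collect_le continuous_intros)
  have c2: "closed {q::real^'n. phi \<bullet> q = 1}"
    by (intro closed_Collect_eq continuous_intros)
  have "Simp = {q::real^'n. \<forall>i. 0 \<le> q$i} \<inter> {q. phi \<bullet> q = 1}" by (auto simp: Simp_def nn_def)
  then have cl: "closed Simp" using c1 c2 by auto
  have "Simp \<subseteq> cball 0 Qc"
  proof
    fix x assume "x \<in> Simp"
    then show "x \<in> cball 0 Qc" using norm_le_Qc[of x] by (simp add: Simp_def)
  qed
  then have "bounded Simp" using bounded_cball bounded_subset by blast
  then show ?thesis using cl by (simp add: compact_eq_bounded_closed)
qed

lemma phi_Simp: "phi \<in> Simp"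
  using phi_pos phi_norm by (simp add: Simp_def nn_def less_imp_le power2_norm_eq_inner[symmetric])

lemma alpha_line_der: "((\<lambda>s. alpha (s *\<^sub>R q)) has_real_derivative (ga (s *\<^sub>R q) \<bullet> q)) (at s)"
proof -
  have "((\<lambda>s. alpha (s *\<^sub>R q)) has_derivative (\<lambda>h. ga (s *\<^sub>R q) \<bullet> (h *\<^sub>R q))) (at s)"
    by (rule has_derivative_compose[of "\<lambda>s. s *\<^sub>R q" _ _ _ alpha, OF _ alpha_der])
       (auto intro!: derivative_eq_intros)
  moreover have "(\<lambda>h. ga (s *\<^sub>R q) \<bullet> (h *\<^sub>R q)) = (\<lambda>h. (ga (s *\<^sub>R q) \<bullet> q) * h)"
    by (simp add: fun_eq_iff)
  ultimately show ?thesis unfolding has_field_derivative_def by simp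
qed

lemma exists_m:
  assumes ab: "a \<le> b"
  shows "\<exists>m>0. \<forall>p ps q. p \<in> {a..b} \<and> ps \<in> {a..b} \<and> q \<in> Simp \<longrightarrow>
           (alpha (p *\<^sub>R q) - alpha (ps *\<^sub>R q)) * (p - ps) \<ge> m * (p - ps)^2"
proof -
  define T where "T = {a..b} \<times> Simp"
  have cT: "compact T" unfolding T_def by (intro compact_Times compact_Icc Simp_compact)
  have neT: "T \<noteq> {}" using ab phi_Simp by (auto simp: T_def)
  have contT: "continuous_on T (\<lambda>z. ga (fst z *\<^sub>R snd z) \<bullet> snd z)"
    by (intro continuous_intros continuous_on_compose2[OF ga_cont]) auto
  obtain z0 where z0: "z0 \<in> T" "\<forall>z\<in>T. ga (fst z0 *\<^sub>R snd z0) \<bullet> snd z0 \<le> ga (fst z *\<^sub>R snd z) \<bullet> snd z"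
    using continuous_attains_inf[OF cT neT contT] by blast
  define m where "m = ga (fst z0 *\<^sub>R snd z0) \<bullet> snd z0"
  have pos: "ga x \<bullet> q > 0" if "q \<in> Simp" for x q
  proof -
    have "q \<noteq> 0" using that by (auto simp: Simp_def)
    then obtain i where "q$i \<noteq> 0" by (auto simp: vec_eq_iff)
    then have qi: "q$i > 0" using that by (auto simp: Simp_def nn_def less_le)
    have "0 < (\<Sum>j\<in>UNIV. ga x $ j * q $ j)"
      by (rule sum_pos2[of UNIV i]) (use qi ga_pos that in \<open>auto simp: Simp_def nn_def intro: mult_nonneg_nonneg less_imp_le\<close>)
    then show ?thesis by (simp add: inner_vec_def)
  qed
  have mpos: "m > 0" unfolding m_def using pos z0(1) by (auto simp: T_def)
  have mle: "m \<le> ga (s *\<^sub>R q) \<bullet> q" if "s \<in> {a..b}" "q \<in> Simp" for s q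
    using z0(2)[rule_format, of "(s, q)"] that by (simp add: m_def T_def)
  have main: "(alpha (p *\<^sub>R q) - alpha (ps *\<^sub>R q)) * (p - ps) \<ge> m * (p - ps)^2"
    if "p \<in> {a..b}" "ps \<in> {a..b}" "q \<in> Simp" for p ps q
  proof -
    define h where "h = (\<lambda>s. alpha (s *\<^sub>R q))"
    have gen: "(h hi - h lo) * (hi - lo) \<ge> m * (hi - lo)^2" if "lo < hi" "lo \<in> {a..b}" "hi \<in> {a..b}" for lo hi
    proof -
      obtain l z where lz: "lo < z" "z < hi" "DERIV h z :> l" "h hi - h lo = (hi - lo) * l"
        using MVT[OF \<open>lo < hi\<close>, of h] alpha_line_der continuous_at_imp_continuous_on
          DERIV_isCont real_differentiable_def unfolding h_def by metis
      have "l = ga (z *\<^sub>R q) \<bullet> q" using lz(3) alpha_line_der DERIV_unique unfolding h_def by metis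
      then have "l \<ge> m" using mle[of z q] lz that \<open>q \<in> Simp\<close> by auto
      then have "(hi - lo)^2 * m \<le> (hi - lo)^2 * l" by (simp add: mult_left_mono)
      moreover have "(h hi - h lo) * (hi - lo) = (hi - lo)^2 * l" using lz(4) by (simp add: power2_eq_square)
      ultimately show ?thesis by (simp add: mult.commute)
    qed
    consider "ps < p" | "p < ps" | "p = ps" by linarith
    then show ?thesis
    proof cases
      case 1 then show ?thesis using gen[of ps p] that by (simp add: h_def)
    next
      case 2 then have "(h ps - h p) * (ps - p) \<ge> m * (ps - p)^2" using gen[of p ps] that by simp
      then show ?thesis by (simp add: h_def power2_commute algebra_simps)
    next
      case 3 then show ?thesis by simp
    qed
  qed
  show ?thesis using mpos main by blast
qed

end


lemma amgm_aux:
  fixes c1 c2 X Y :: real assumes "c1 > 0"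
  shows "c2 * X * Y \<le> c1 / 2 * X^2 + c2^2 / (2 * c1) * Y^2"
proof -
  have "0 \<le> (c1 * X - c2 * Y)^2" by simp
  then have "2 * c1 * (c2 * X * Y) \<le> c1 * c1 * X^2 + c2^2 * Y^2"
    by (simp add: power2_eq_square algebra_simps)
  then have "c2 * X * Y \<le> (c1 * c1 * X^2 + c2^2 * Y^2) / (2 * c1)"
    using assms by (simp add: pos_le_divide_eq mult.commute)
  also have "\<dots> = c1 / 2 * X^2 + c2^2 / (2 * c1) * Y^2"
    using assms by (simp add: field_simps power2_eq_square)
  finally show ?thesis .
qed

lemma final_ineq:
  fixes c1 c2 gap th eta X Y T :: real
  assumes c1: "c1 > 0" and gp: "gap > 0" and th: "th = c2^2 / (c1 * gap) + 1"
    and X: "X \<ge> 0" and Y: "Y \<ge> 0" and eta: "eta \<ge> 0" "8 * eta \<le> min c1 gap"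
    and T: "T \<le> - c1 * X^2 + c2 * X * Y - th * gap * Y^2 + eta * (X + Y)^2"
  shows "T \<le> - (min c1 gap / 4) * (X^2 + th * Y^2)"
proof -
  define P where "P = c1 * X^2"
  define Q where "Q = th * gap * Y^2"
  define Z where "Z = c2 * X * Y"
  define W where "W = eta * (X + Y)^2"
  define M where "M = min c1 gap"
  have T': "T \<le> - P + Z - Q + W" using T by (simp add: P_def Q_def Z_def W_def)
  have th1: "th \<ge> 1" using th c1 gp by simp
  have "c2^2 / (2 * c1) \<le> th * gap / 2"
    using th c1 gp by (simp add: field_simps)
  then have "c2^2 / (2 * c1) * Y^2 \<le> th * gap / 2 * Y^2" by (rule mult_right_mono) simp
  moreover have "c1 / 2 * X^2 = P / 2" by (simp add: P_def)
  moreover have "th * gap / 2 * Y^2 = Q / 2" by (simp add: Q_def)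
  ultimately have a1: "Z \<le> P / 2 + Q / 2" using amgm_aux[OF c1, of c2 X Y] Z_def by linarith
  have "(X + Y)^2 \<le> 2 * (X^2 + Y^2)" using sum_squares_bound[of X Y] by (simp add: power2_eq_square algebra_simps)
  then have "eta * (X + Y)^2 \<le> eta * (2 * (X^2 + Y^2))" using eta by (simp add: mult_left_mono)
  also have "\<dots> = (2 * eta) * X^2 + (2 * eta) * Y^2" by (simp add: algebra_simps)
  also have "\<dots> \<le> (M / 4) * X^2 + (M / 4) * Y^2"
    using eta by (intro add_mono mult_right_mono) (auto simp: M_def)
  finally have a2: "W \<le> (M / 4) * X^2 + (M / 4) * Y^2" by (simp add: W_def)
  have b1: "(M / 4) * X^2 \<le> P / 4"
  proof -
    have "M \<le> c1" by (simp add: M_def)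
    then have "M * X^2 \<le> c1 * X^2" by (rule mult_right_mono) simp
    then show ?thesis by (simp add: P_def)
  qed
  have b2: "(M / 4) * (th * Y^2) \<le> Q / 4"
  proof -
    have "M \<le> gap" by (simp add: M_def)
    then have "M * (th * Y^2) \<le> gap * (th * Y^2)" by (rule mult_right_mono) (use th1 in simp)
    then show ?thesis by (simp add: Q_def mult_ac)
  qed
  have b3: "(M / 4) * Y^2 \<le> (M / 4) * (th * Y^2)"
  proof -
    have "Y^2 \<le> th * Y^2" using th1 by (simp add: mult_le_cancel_right1)
    then show ?thesis by (rule mult_left_mono) (use c1 gp in \<open>simp add: M_def\<close>)
  qed
  have "T \<le> - (M / 4) * X^2 - (M / 4) * (th * Y^2)" using T' a1 a2 b1 b2 b3 by linarith
  then show ?thesis by (simp add: M_def algebra_simps)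
qed

locale sysloc2 = sysloc +
  fixes a b A Lp m :: real
  assumes a_pos: "a > 0" and a_le1: "a \<le> 1" and b_ge1: "b \<ge> 1"
    and a_prop: "\<And>v. nn v \<Longrightarrow> phi \<bullet> v < a \<Longrightarrow> alpha v \<le> K * lam / 4"
    and b_prop: "\<And>v. nn v \<Longrightarrow> phi \<bullet> v \<ge> b \<Longrightarrow> alpha v \<ge> 2 * K * lam"
    and A_nonneg: "A \<ge> 0"
    and A_prop: "\<And>x y. x \<in> cball 0 (b * Qc) \<Longrightarrow> y \<in> cball 0 (b * Qc) \<Longrightarrow> \<bar>alpha x - alpha y\<bar> \<le> A * norm (x - y)"
    and Lp_nonneg: "Lp \<ge> 0"
    and Lp_prop: "\<And>i x y. x \<in> cball 0 (b * Qc) \<Longrightarrow> y \<in> cball 0 (b * Qc) \<Longrightarrow> \<bar>psi i x - psi i y\<bar> \<le> Lp * norm (x - y)"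
    and m_pos: "m > 0"
    and m_prop: "\<And>p ps q. p \<in> {a..b} \<Longrightarrow> ps \<in> {a..b} \<Longrightarrow> q \<in> Simp \<Longrightarrow>
           (alpha (p *\<^sub>R q) - alpha (ps *\<^sub>R q)) * (p - ps) \<ge> m * (p - ps)^2"
begin

definition "eps1 = K * lam / (4 * (B + 1))"

lemma eps1_pos: "eps1 > 0" using K_pos lam_pos B_nonneg by (simp add: eps1_def)

lemma eB: assumes "0 \<le> e" "e \<le> eps1" shows "e * B / K \<le> lam / 4"
proof -
  have "e * B \<le> eps1 * B" using assms B_nonneg by (simp add: mult_right_mono)
  also have "\<dots> = K * lam / 4 * (B / (B + 1))" using B_nonneg by (simp add: eps1_def field_simps)
  also have "\<dots> \<le> K * lam / 4 * 1" using B_nonneg K_pos lam_pos by (intro mult_left_mono) auto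
  finally show ?thesis using K_pos by (simp add: pos_divide_le_eq mult.commute)
qed

lemma eGv_bd: assumes "0 \<le> e" "e \<le> eps1" "nn v"
  shows "(e / K) * (phi \<bullet> Gv v) \<le> (lam / 4) * (phi \<bullet> v)"
proof -
  have "(e / K) * (phi \<bullet> Gv v) \<le> (e / K) * \<bar>phi \<bullet> Gv v\<bar>"
    using assms K_pos by (intro mult_left_mono) auto
  also have "\<dots> \<le> (e / K) * (B * (phi \<bullet> v))"
    using assms K_pos phiGv_bd[OF assms(3)] by (intro mult_left_mono) auto
  also have "\<dots> = (e * B / K) * (phi \<bullet> v)" by simp
  also have "\<dots> \<le> (lam / 4) * (phi \<bullet> v)"
    using eB[OF assms(1,2)] p_nonneg[OF assms(3)] by (intro mult_right_mono) auto
  finally show ?thesis .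
qed

lemma eGv_bd2: assumes "0 \<le> e" "e \<le> eps1" "nn v"
  shows "- (e / K) * (phi \<bullet> Gv v) \<le> (lam / 4) * (phi \<bullet> v)"
proof -
  have "- (e / K) * (phi \<bullet> Gv v) \<le> (e / K) * \<bar>phi \<bullet> Gv v\<bar>"
    using assms K_pos by (simp add: abs_if mult_le_0_iff)
  also have "\<dots> \<le> (e / K) * (B * (phi \<bullet> v))"
    using assms K_pos phiGv_bd[OF assms(3)] by (intro mult_left_mono) auto
  also have "\<dots> = (e * B / K) * (phi \<bullet> v)" by simp
  also have "\<dots> \<le> (lam / 4) * (phi \<bullet> v)"
    using eB[OF assms(1,2)] p_nonneg[OF assms(3)] by (intro mult_right_mono) auto
  finally show ?thesis .
qed

lemma p_low: assumes "0 \<le> e" "e \<le> eps1" "nn v" "phi \<bullet> v < a"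
  shows "phi \<bullet> F e v \<ge> (lam / 2) * (phi \<bullet> v)"
proof -
  have "alpha v / K \<le> lam / 4" using a_prop[OF assms(3,4)] K_pos by (simp add: divide_le_eq mult.commute)
  then have "(alpha v / K) * (phi \<bullet> v) \<le> (lam / 4) * (phi \<bullet> v)"
    by (rule mult_right_mono) (rule p_nonneg[OF assms(3)])
  then have h1: "alpha v / K * (phi \<bullet> v) \<le> lam * (phi \<bullet> v) / 4" by simp
  have h2: "e / K * (phi \<bullet> Gv v) \<le> lam * (phi \<bullet> v) / 4" using eGv_bd[OF assms(1-3)] by simp
  have "lam / 2 * (phi \<bullet> v) = lam * (phi \<bullet> v) / 2" by simp
  moreover have "lam * (phi \<bullet> v) \<ge> 0" using lam_pos p_nonneg[OF assms(3)] by simp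
  ultimately show ?thesis using phi_F[of e v] h1 h2 by linarith
qed

lemma p_high: assumes "0 \<le> e" "e \<le> eps1" "nn v" "phi \<bullet> v \<ge> b"
  shows "phi \<bullet> F e v \<le> - (lam / 2) * (phi \<bullet> v)"
proof -
  have "alpha v / K \<ge> 2 * lam" using b_prop[OF assms(3,4)] K_pos by (simp add: le_divide_eq mult_ac)
  then have "(alpha v / K) * (phi \<bullet> v) \<ge> (2 * lam) * (phi \<bullet> v)"
    by (rule mult_right_mono) (rule p_nonneg[OF assms(3)])
  then have h1: "alpha v / K * (phi \<bullet> v) \<ge> 2 * (lam * (phi \<bullet> v))" by simp
  have h2: "- (e / K * (phi \<bullet> Gv v)) \<le> lam * (phi \<bullet> v) / 4" using eGv_bd2[OF assms(1-3)] by simp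
  have "- (lam / 2) * (phi \<bullet> v) = - (lam * (phi \<bullet> v) / 2)" by simp
  moreover have "lam * (phi \<bullet> v) \<ge> 0" using lam_pos p_nonneg[OF assms(3)] by simp
  ultimately show ?thesis using phi_F[of e v] h1 h2 by linarith
qed

lemma stat_range: assumes "0 \<le> e" "e \<le> eps1" "\<forall>i. vs$i > 0" "F e vs = 0"
  shows "phi \<bullet> vs \<in> {a..b}"
proof -
  have nv: "nn vs" using assms(3) by (simp add: nn_def less_imp_le)
  have "vs \<noteq> 0" using assms(3) by (metis less_irrefl zero_index)
  then have pp: "phi \<bullet> vs > 0" using p_pos[OF nv] by blast
  have "\<not> phi \<bullet> vs < a"
  proof
    assume "phi \<bullet> vs < a"
    then have "phi \<bullet> F e vs \<ge> (lam / 2) * (phi \<bullet> vs)" using p_low[OF assms(1,2) nv] by blast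
    moreover have "0 < (lam / 2) * (phi \<bullet> vs)" using pp lam_pos by simp
    ultimately show False using assms(4) by simp
  qed
  moreover have "\<not> phi \<bullet> vs \<ge> b"
  proof
    assume "phi \<bullet> vs \<ge> b"
    then have "phi \<bullet> F e vs \<le> - (lam / 2) * (phi \<bullet> vs)" using p_high[OF assms(1,2) nv] by blast
    moreover have "0 < (lam / 2) * (phi \<bullet> vs)" using pp lam_pos by simp
    ultimately show False using assms(4) by simp
  qed
  ultimately show ?thesis by simp
qed

end


context sysloc begin

definition "pp v = phi \<bullet> v"
definition "qq v = (1 / pp v) *\<^sub>R v"
definition "Gq v = (\<chi> i. psi i v * qq v $ i)"
definition "Hq v = Gq v - (phi \<bullet> Gq v) *\<^sub>R qq v"
definition "qd e v = (1 / pp v) *\<^sub>R F e v - ((phi \<bullet> F e v) / (pp v)^2) *\<^sub>R v"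

lemma v_eq: "pp v \<noteq> 0 \<Longrightarrow> v = pp v *\<^sub>R qq v"
  by (simp add: qq_def)

lemma Gv_eq: "pp v \<noteq> 0 \<Longrightarrow> Gv v = pp v *\<^sub>R Gq v"
  by (simp add: Gv_def Gq_def qq_def vec_eq_iff)

lemma phi_qq: "pp v \<noteq> 0 \<Longrightarrow> phi \<bullet> qq v = 1"
  by (simp add: qq_def pp_def)

lemma F_W: assumes "pp v \<noteq> 0"
  shows "F e v = pp v *\<^sub>R (Dmat r mu *v qq v - (alpha v / K) *\<^sub>R qq v - (e / K) *\<^sub>R Gq v)"
proof -
  have "F e v = Dmat r mu *v (pp v *\<^sub>R qq v) - (alpha v / K) *\<^sub>R (pp v *\<^sub>R qq v) - (e / K) *\<^sub>R (pp v *\<^sub>R Gq v)"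
    using F_eq[of e v] v_eq[OF assms] Gv_eq[OF assms] by metis
  then show ?thesis by (simp add: matrix_vector_mult_scaleR algebra_simps)
qed

lemma phi_W: assumes "pp v \<noteq> 0"
  shows "phi \<bullet> (Dmat r mu *v qq v - (alpha v / K) *\<^sub>R qq v - (e / K) *\<^sub>R Gq v)
        = lam - alpha v / K - (e / K) * (phi \<bullet> Gq v)"
  using phi_qq[OF assms] by (simp add: inner_diff_right phi_D)

lemma pF_formula: assumes "pp v \<noteq> 0"
  shows "phi \<bullet> F e v = pp v * (lam - alpha v / K - (e / K) * (phi \<bullet> Gq v))"
  using F_W[OF assms, of e] phi_W[OF assms, of e] by simp

lemma qd_formula: assumes "pp v \<noteq> 0"
  shows "qd e v = Dmat r mu *v qq v - lam *\<^sub>R qq v - (e / K) *\<^sub>R Hq v"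
proof -
  define W where "W = Dmat r mu *v qq v - (alpha v / K) *\<^sub>R qq v - (e / K) *\<^sub>R Gq v"
  have FW: "F e v = pp v *\<^sub>R W" using F_W[OF assms] by (simp add: W_def)
  have pW: "phi \<bullet> W = lam - alpha v / K - (e / K) * (phi \<bullet> Gq v)" using phi_W[OF assms] by (simp add: W_def)
  have "qd e v = (1 / pp v) *\<^sub>R (pp v *\<^sub>R W) - ((pp v * (phi \<bullet> W)) / (pp v)^2) *\<^sub>R (pp v *\<^sub>R qq v)"
    unfolding qd_def using FW v_eq[OF assms] by (metis inner_scaleR_right)
  also have "\<dots> = W - (phi \<bullet> W) *\<^sub>R qq v"
    using assms by (simp add: power2_eq_square)
  also have "\<dots> = Dmat r mu *v qq v - lam *\<^sub>R qq v - (e / K) *\<^sub>R Hq v"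
    unfolding pW unfolding W_def Hq_def by (simp add: algebra_simps scaleR_diff_left phi_D phi_qq[OF assms])
  finally show ?thesis .
qed

lemma qd_stat: "F e v = 0 \<Longrightarrow> qd e v = 0"
  by (simp add: qd_def)

lemma qq_Simp: assumes "nn v" "pp v > 0" shows "qq v \<in> Simp"
  using assms by (simp add: Simp_def nn_def qq_def pp_def)

lemma Simp_norm: "q \<in> Simp \<Longrightarrow> norm q \<le> Qc"
  using norm_le_Qc[of q] by (simp add: Simp_def)

lemma Simp_comp: "q \<in> Simp \<Longrightarrow> \<bar>q $ i\<bar> \<le> Qc"
  using Simp_norm component_le_norm_cart order_trans by blast

lemma in_cball: assumes "nn v" "pp v \<le> c" shows "v \<in> cball 0 (c * Qc)"
proof -
  have "norm v \<le> Qc * pp v" using norm_le_Qc[OF assms(1)] by (simp add: pp_def)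
  also have "\<dots> \<le> Qc * c" using assms(2) Qc_pos by simp
  finally show ?thesis by (simp add: mult.commute)
qed

lemma phiGq_bd: assumes "nn v" "pp v > 0" shows "\<bar>phi \<bullet> Gq v\<bar> \<le> B"
proof -
  have "Gv v = pp v *\<^sub>R Gq v" using Gv_eq assms by simp
  then have "\<bar>pp v * (phi \<bullet> Gq v)\<bar> \<le> B * pp v" using phiGv_bd[OF assms(1)] by (simp add: pp_def)
  then have "pp v * \<bar>phi \<bullet> Gq v\<bar> \<le> pp v * B" using assms(2) by (simp add: abs_mult mult.commute)
  then show ?thesis using assms(2) by simp
qed

lemma Qc_phimin: "Qc * phimin = real CARD('n)"
  using phimin_pos by (simp add: Qc_def)

lemma abs_inner_phi: "\<bar>phi \<bullet> w\<bar> \<le> norm w"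
  using Cauchy_Schwarz_ineq2[of phi w] phi_norm by simp

lemma Gq_diff:
  assumes q: "qq v \<in> Simp" "qq vs \<in> Simp"
    and lip: "\<And>i. \<bar>psi i v - psi i vs\<bar> \<le> L * norm (v - vs)"
  shows "norm (Gq v - Gq vs) \<le> real CARD('n) * (B * norm (qq v - qq vs) + L * norm (v - vs) * Qc)"
proof -
  have "norm (Gq v - Gq vs) \<le> (\<Sum>i\<in>UNIV. \<bar>(Gq v - Gq vs) $ i\<bar>)" by (rule norm_le_l1_cart)
  also have "\<dots> \<le> (\<Sum>i\<in>(UNIV::'n set). B * norm (qq v - qq vs) + L * norm (v - vs) * Qc)"
  proof (rule sum_mono)
    fix i
    have eq: "(Gq v - Gq vs) $ i = psi i v * (qq v $ i - qq vs $ i) + (psi i v - psi i vs) * qq vs $ i"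
      by (simp add: Gq_def algebra_simps)
    have "\<bar>psi i v * (qq v $ i - qq vs $ i)\<bar> \<le> B * norm (qq v - qq vs)"
    proof -
      have "\<bar>qq v $ i - qq vs $ i\<bar> \<le> norm (qq v - qq vs)" using component_le_norm_cart[of "qq v - qq vs" i] by simp
      then show ?thesis unfolding abs_mult using psi_bdd B_nonneg by (intro mult_mono) auto
    qed
    moreover have "\<bar>(psi i v - psi i vs) * qq vs $ i\<bar> \<le> L * norm (v - vs) * Qc"
      unfolding abs_mult using lip[of i] Simp_comp[OF q(2), of i] by (intro mult_mono) auto
    ultimately show "\<bar>(Gq v - Gq vs) $ i\<bar> \<le> B * norm (qq v - qq vs) + L * norm (v - vs) * Qc"
      unfolding eq by (meson abs_triangle_ineq add_mono order_trans)
  qed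
  also have "\<dots> = real CARD('n) * (B * norm (qq v - qq vs) + L * norm (v - vs) * Qc)" by simp
  finally show ?thesis .
qed

lemma Hq_diff:
  assumes "nn v" "pp v > 0" "qq vs \<in> Simp"
  shows "norm (Hq v - Hq vs) \<le> (1 + Qc) * norm (Gq v - Gq vs) + B * norm (qq v - qq vs)"
proof -
  have eq: "Hq v - Hq vs = (Gq v - Gq vs) - ((phi \<bullet> Gq v) *\<^sub>R (qq v - qq vs) + (phi \<bullet> (Gq v - Gq vs)) *\<^sub>R qq vs)"
    by (simp add: Hq_def algebra_simps inner_diff_right)
  have "norm (Hq v - Hq vs) \<le> norm (Gq v - Gq vs) + (norm ((phi \<bullet> Gq v) *\<^sub>R (qq v - qq vs)) + norm ((phi \<bullet> (Gq v - Gq vs)) *\<^sub>R qq vs))"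
    unfolding eq by (meson add_left_mono norm_triangle_ineq norm_triangle_ineq4 order_trans)
  also have "norm ((phi \<bullet> Gq v) *\<^sub>R (qq v - qq vs)) \<le> B * norm (qq v - qq vs)"
    using phiGq_bd[OF assms(1,2)] by (simp add: mult_right_mono)
  also have "norm ((phi \<bullet> (Gq v - Gq vs)) *\<^sub>R qq vs) \<le> norm (Gq v - Gq vs) * Qc"
    using abs_inner_phi[of "Gq v - Gq vs"] Simp_norm[OF assms(3)] by (simp add: mult_mono)
  finally show ?thesis by (simp add: algebra_simps)
qed

end


context sysloc2 begin

definition "NNc = Qc * phimin"
definition "LG = NNc * (B + Lp * Qc * (Qc + b))"
definition "LH = (1 + Qc) * LG + B"
definition "c1 = a * m / K"
definition "c2 = A * b * b / K"
definition "th = c2^2 / (c1 * gap) + 1"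
definition "EE = b * LG / K + th * LH / K"
definition "eps0 = min eps1 (min c1 gap / (8 * EE + 1))"
definition "kap = min c1 gap / 2"

lemma NNc_card: "NNc = real CARD('a)" unfolding NNc_def Qc_phimin ..
lemma zero_le_card_real: "0 \<le> real CARD('a)" by simp
lemma NNc_nonneg: "NNc \<ge> 0" using Qc_pos phimin_pos by (simp add: NNc_def)
lemma LG_nonneg: "LG \<ge> 0" using NNc_nonneg B_nonneg Lp_nonneg Qc_pos b_ge1 by (simp add: LG_def)
lemma LH_nonneg: "LH \<ge> 0" using LG_nonneg B_nonneg Qc_pos by (simp add: LH_def)
lemma c1_pos: "c1 > 0" using a_pos m_pos K_pos by (simp add: c1_def)
lemma th_ge1: "th \<ge> 1" using c1_pos gap_pos by (simp add: th_def)
lemma EE_nonneg: "EE \<ge> 0" using LG_nonneg LH_nonneg th_ge1 K_pos b_ge1 by (simp add: EE_def)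
lemma eps0_pos: "eps0 > 0" using eps1_pos c1_pos gap_pos EE_nonneg by (simp add: eps0_def)
lemma kap_pos: "kap > 0" using c1_pos gap_pos by (simp add: kap_def)
lemma eps0_le: "eps0 \<le> eps1" by (simp add: eps0_def)

lemma eta_bd: assumes "0 \<le> e" "e \<le> eps0" shows "8 * (e * EE) \<le> min c1 gap"
proof -
  have "e \<le> min c1 gap / (8 * EE + 1)" using assms by (simp add: eps0_def)
  then have "e * (8 * EE + 1) \<le> min c1 gap" using EE_nonneg by (simp add: pos_le_divide_eq)
  moreover have "8 * (e * EE) \<le> e * (8 * EE + 1)" using assms by (simp add: algebra_simps)
  ultimately show ?thesis by linarith
qed

lemma lin_bound: assumes "p \<in> {a..b}" "u \<ge> 0" "w \<ge> 0" shows "p * (- u + w) \<le> - a * u + b * w"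
proof -
  have "a * u \<le> p * u" using assms by (simp add: mult_right_mono)
  moreover have "p * w \<le> b * w" using assms by (simp add: mult_right_mono)
  ultimately show ?thesis by (simp add: algebra_simps)
qed

lemma state_ineq:
  assumes e: "0 \<le> e" "e \<le> eps0" and v: "nn v" "pp v \<in> {a..b}"
    and vs: "\<forall>i. vs$i > 0" "F e vs = 0"
  shows "2 * (pp v - pp vs) * (phi \<bullet> F e v) + th * (2 * ((qq v - qq vs) \<bullet> qd e v))
     \<le> - kap * ((pp v - pp vs)^2 + th * (norm (qq v - qq vs))^2)"
proof -
  have e1: "e \<le> eps1" using e eps0_le by linarith
  have nvs: "nn vs" using vs(1) by (simp add: nn_def less_imp_le)
  define p where "p = pp v"
  define ps where "ps = pp vs"
  have ps_ab: "ps \<in> {a..b}" using stat_range[OF e(1) e1 vs] by (simp add: ps_def pp_def)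
  have p_ab: "p \<in> {a..b}" using v by (simp add: p_def)
  have ppos: "p > 0" "ps > 0" using p_ab ps_ab a_pos by auto
  define q where "q = qq v"
  define qs where "qs = qq vs"
  have qS: "q \<in> Simp" "qs \<in> Simp" using qq_Simp v(1) nvs ppos by (auto simp: q_def qs_def p_def ps_def)
  have veq: "v = p *\<^sub>R q" "vs = ps *\<^sub>R qs" using v_eq ppos by (auto simp: p_def q_def ps_def qs_def)
  have vball: "v \<in> cball 0 (b * Qc)" "vs \<in> cball 0 (b * Qc)"
    using in_cball[OF v(1), of b] in_cball[OF nvs, of b] p_ab ps_ab by (auto simp: p_def ps_def)
  define x where "x = p - ps"
  define y where "y = q - qs"
  define X where "X = \<bar>x\<bar>"
  define Y where "Y = norm y"
  have XY: "X \<ge> 0" "Y \<ge> 0" by (simp_all add: X_def Y_def)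
  have L1: "norm (v - vs) \<le> Qc * X + b * Y"
  proof -
    have "v - vs = x *\<^sub>R q + ps *\<^sub>R y" using veq by (simp add: x_def y_def algebra_simps)
    then have "norm (v - vs) \<le> X * norm q + ps * Y"
      using norm_triangle_ineq[of "x *\<^sub>R q" "ps *\<^sub>R y"] ppos by (simp add: X_def Y_def)
    also have "\<dots> \<le> X * Qc + b * Y"
      using Simp_norm[OF qS(1)] ps_ab XY b_ge1 by (intro add_mono mult_mono) auto
    finally show ?thesis by (simp add: mult.commute)
  qed
  have lipv: "\<And>i. \<bar>psi i v - psi i vs\<bar> \<le> Lp * norm (v - vs)" using Lp_prop vball by blast
  define G where "G = Gq v"
  define Gs where "Gs = Gq vs"
  have L2: "norm (G - Gs) \<le> LG * (X + Y)"
  proof -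
    have "norm (G - Gs) \<le> real CARD('a) * (B * Y + Lp * norm (v - vs) * Qc)"
      using Gq_diff[of v vs Lp, OF _ _ lipv] qS by (simp add: G_def Gs_def  q_def qs_def Y_def y_def)
    also have "\<dots> \<le> real CARD('a) * (B * Y + Lp * (Qc * X + b * Y) * Qc)"
      using zero_le_card_real Lp_nonneg Qc_pos L1 by (intro mult_left_mono add_left_mono mult_right_mono) auto
    also have "\<dots> \<le> LG * (X + Y)"
    proof -
      have eq: "LG * (X + Y) = real CARD('a) * (B * Y + Lp * (Qc * X + b * Y) * Qc) + real CARD('a) * (B * X + Lp * Qc * b * X + Lp * Qc * Qc * Y)"
        by (simp add: LG_def NNc_card algebra_simps)
      have "0 \<le> real CARD('a) * (B * X + Lp * Qc * b * X + Lp * Qc * Qc * Y)"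
        using zero_le_card_real B_nonneg Lp_nonneg Qc_pos b_ge1 XY by (intro mult_nonneg_nonneg add_nonneg_nonneg) auto
      then show ?thesis using eq by linarith
    qed
    finally show ?thesis .
  qed
  define H where "H = Hq v"
  define Hs where "Hs = Hq vs"
  have L3: "norm (H - Hs) \<le> LH * (X + Y)"
  proof -
    have "norm (H - Hs) \<le> (1 + Qc) * norm (G - Gs) + B * Y"
      using Hq_diff[of v vs] v(1) ppos qS by (simp add: H_def Hs_def G_def Gs_def Y_def y_def q_def qs_def p_def)
    also have "\<dots> \<le> (1 + Qc) * (LG * (X + Y)) + B * (X + Y)"
      using L2 Qc_pos B_nonneg XY by (intro add_mono mult_left_mono) auto
    also have "\<dots> = LH * (X + Y)" by (simp add: LH_def algebra_simps)
    finally show ?thesis .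
  qed
  have pF: "phi \<bullet> F e v = p * ((alpha vs - alpha v) / K - (e / K) * (phi \<bullet> (G - Gs)))"
  proof -
    have "phi \<bullet> F e vs = ps * (lam - alpha vs / K - (e / K) * (phi \<bullet> Gs))"
      using pF_formula ppos by (simp add: ps_def Gs_def)
    then have z: "lam - alpha vs / K - (e / K) * (phi \<bullet> Gs) = 0" using vs(2) ppos by simp
    have "phi \<bullet> F e v = p * (lam - alpha v / K - (e / K) * (phi \<bullet> G))"
      using pF_formula ppos by (simp add: p_def G_def)
    also have "\<dots> = p * ((alpha vs - alpha v) / K - (e / K) * (phi \<bullet> (G - Gs)))"
      using z by (simp add: inner_diff_right diff_divide_distrib algebra_simps)
    finally show ?thesis .
  qed
  have monoA: "(alpha (p *\<^sub>R q) - alpha (ps *\<^sub>R q)) * x \<ge> m * x^2"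
    using m_prop[OF p_ab ps_ab qS(1)] by (simp add: x_def)
  have lipA: "\<bar>alpha (ps *\<^sub>R q) - alpha (ps *\<^sub>R qs)\<bar> \<le> A * b * Y"
  proof -
    have b1: "ps *\<^sub>R q \<in> cball 0 (b * Qc)" "ps *\<^sub>R qs \<in> cball 0 (b * Qc)"
      using Simp_norm[OF qS(1)] Simp_norm[OF qS(2)] ps_ab ppos
      by (auto intro!: mult_mono simp: mult.commute)
    have "\<bar>alpha (ps *\<^sub>R q) - alpha (ps *\<^sub>R qs)\<bar> \<le> A * norm (ps *\<^sub>R q - ps *\<^sub>R qs)"
      using A_prop[OF b1] .
    also have "norm (ps *\<^sub>R q - ps *\<^sub>R qs) = ps * Y"
      using ppos by (simp add: Y_def y_def scaleR_right_diff_distrib[symmetric])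
    also have "A * (ps * Y) \<le> A * b * Y"
      using A_nonneg ps_ab XY by (simp add: mult.assoc mult_left_mono mult_right_mono)
    finally show ?thesis .
  qed
  have xa: "x * (alpha vs - alpha v) \<le> - m * x^2 + A * b * X * Y"
  proof -
    have "x * (alpha vs - alpha v) = - ((alpha (p *\<^sub>R q) - alpha (ps *\<^sub>R q)) * x) - x * (alpha (ps *\<^sub>R q) - alpha (ps *\<^sub>R qs))"
      using veq by (simp add: algebra_simps)
    moreover have "- (x * (alpha (ps *\<^sub>R q) - alpha (ps *\<^sub>R qs))) \<le> X * (A * b * Y)"
    proof -
      have "- (x * (alpha (ps *\<^sub>R q) - alpha (ps *\<^sub>R qs))) \<le> \<bar>x\<bar> * \<bar>alpha (ps *\<^sub>R q) - alpha (ps *\<^sub>R qs)\<bar>"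
        by (metis abs_ge_minus_self abs_mult)
      also have "\<dots> \<le> X * (A * b * Y)" using lipA by (simp add: X_def mult_left_mono)
      finally show ?thesis .
    qed
    ultimately show ?thesis using monoA by (simp add: algebra_simps)
  qed
  have xe: "- (x * ((e / K) * (phi \<bullet> (G - Gs)))) \<le> (e / K) * (LG * (X + Y) * X)"
  proof -
    have "- (x * ((e / K) * (phi \<bullet> (G - Gs)))) \<le> \<bar>x\<bar> * ((e / K) * \<bar>phi \<bullet> (G - Gs)\<bar>)"
      using e K_pos by (metis abs_ge_minus_self abs_mult abs_of_nonneg divide_nonneg_pos mult_nonneg_nonneg abs_mult[of "e/K"])
    also have "\<dots> \<le> X * ((e / K) * (LG * (X + Y)))"
    proof -
      have "(e / K) * \<bar>phi \<bullet> (G - Gs)\<bar> \<le> (e / K) * (LG * (X + Y))"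
        using abs_inner_phi[of "G - Gs"] L2 e K_pos by (intro mult_left_mono) auto
      then show ?thesis unfolding X_def by (rule mult_left_mono) simp
    qed
    finally show ?thesis by (simp add: algebra_simps)
  qed
  have T1: "x * (phi \<bullet> F e v) \<le> - c1 * X^2 + c2 * X * Y + e * (b * LG / K) * (X + Y) * X"
  proof -
    have "x * (phi \<bullet> F e v) = p * (x * (alpha vs - alpha v) / K - x * ((e / K) * (phi \<bullet> (G - Gs))))"
      unfolding pF by (simp add: algebra_simps)
    also have "\<dots> \<le> p * (- (m * x^2 / K) + (A * b * X * Y / K + (e / K) * (LG * (X + Y) * X)))"
    proof -
      have "x * (alpha vs - alpha v) / K \<le> (- m * x^2 + A * b * X * Y) / K"
        using xa K_pos by (simp add: divide_right_mono)
      then show ?thesis using xe ppos by (intro mult_left_mono) (auto simp: diff_divide_distrib)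
    qed
    also have "\<dots> \<le> - a * (m * x^2 / K) + b * (A * b * X * Y / K + (e / K) * (LG * (X + Y) * X))"
      using p_ab m_pos K_pos A_nonneg b_ge1 XY e LG_nonneg
      by (intro lin_bound) (auto intro!: add_nonneg_nonneg mult_nonneg_nonneg divide_nonneg_pos)
    also have "\<dots> = - c1 * X^2 + c2 * X * Y + e * (b * LG / K) * (X + Y) * X"
      by (simp add: c1_def c2_def X_def power2_abs algebra_simps add_divide_distrib)
    finally show ?thesis .
  qed
  have T2: "y \<bullet> qd e v \<le> - gap * Y^2 + e * (LH / K) * (X + Y) * Y"
  proof -
    have qdv: "qd e v = Dmat r mu *v q - lam *\<^sub>R q - (e / K) *\<^sub>R H"
      using qd_formula ppos by (simp add: q_def H_def p_def)
    have "0 = Dmat r mu *v qs - lam *\<^sub>R qs - (e / K) *\<^sub>R Hs"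
      using qd_formula[of vs e] qd_stat[OF vs(2)] ppos by (simp add: qs_def Hs_def ps_def)
    then have qdy: "qd e v = (Dmat r mu *v y - lam *\<^sub>R y) - (e / K) *\<^sub>R (H - Hs)"
      unfolding qdv y_def by (simp add: matrix_vector_mult_diff_distrib algebra_simps)
    have py: "phi \<bullet> y = 0" using qS by (simp add: y_def Simp_def inner_diff_right)
    have g1: "y \<bullet> (Dmat r mu *v y - lam *\<^sub>R y) \<le> - gap * Y^2"
      using gap_bd[OF py] by (simp add: inner_diff_right Y_def power2_norm_eq_inner algebra_simps)
    have g2: "- (y \<bullet> ((e / K) *\<^sub>R (H - Hs))) \<le> e * (LH / K) * (X + Y) * Y"
    proof -
      have c: "- (y \<bullet> (H - Hs)) \<le> Y * norm (H - Hs)"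
        using Cauchy_Schwarz_ineq2[of y "H - Hs"] by (simp add: Y_def abs_le_iff)
      have "(e / K) * (- (y \<bullet> (H - Hs))) \<le> (e / K) * (Y * norm (H - Hs))"
        using c e K_pos by (intro mult_left_mono) auto
      then have "- (y \<bullet> ((e / K) *\<^sub>R (H - Hs))) \<le> (e / K) * (Y * norm (H - Hs))"
        by simp
      also have "\<dots> \<le> (e / K) * (Y * (LH * (X + Y)))"
        using L3 e K_pos XY by (intro mult_left_mono) auto
      also have "\<dots> = e * (LH / K) * (X + Y) * Y" by (simp add: algebra_simps add_divide_distrib)
      finally show ?thesis .
    qed
    show ?thesis unfolding qdy using g1 g2 by (simp add: inner_diff_right)
  qed
  define T where "T = x * (phi \<bullet> F e v) + th * (y \<bullet> qd e v)"
  have T3: "T \<le> - c1 * X^2 + c2 * X * Y - th * gap * Y^2 + (e * EE) * (X + Y)^2"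
  proof -
    have "th * (y \<bullet> qd e v) \<le> th * (- gap * Y^2 + e * (LH / K) * (X + Y) * Y)"
      using T2 th_ge1 by (intro mult_left_mono) auto
    then have "T \<le> - c1 * X^2 + c2 * X * Y - th * gap * Y^2 + e * ((b * LG / K) * ((X + Y) * X) + th * (LH / K) * ((X + Y) * Y))"
      using T1 by (simp add: T_def algebra_simps)
    also have "e * ((b * LG / K) * ((X + Y) * X) + th * (LH / K) * ((X + Y) * Y)) \<le> e * ((b * LG / K) * (X + Y)^2 + th * (LH / K) * (X + Y)^2)"
    proof -
      have "(X + Y) * X \<le> (X + Y)^2" "(X + Y) * Y \<le> (X + Y)^2" using XY by (simp_all add: power2_eq_square mult_left_mono)
      then show ?thesis using e K_pos LG_nonneg LH_nonneg th_ge1 b_ge1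
        by (intro mult_left_mono add_mono) (auto intro!: mult_left_mono mult_nonneg_nonneg)
    qed
    also have "e * ((b * LG / K) * (X + Y)^2 + th * (LH / K) * (X + Y)^2) = (e * EE) * (X + Y)^2"
      by (simp add: EE_def algebra_simps)
    finally show ?thesis by simp
  qed
  have fin: "T \<le> - (min c1 gap / 4) * (X^2 + th * Y^2)"
    by (rule final_ineq[OF c1_pos gap_pos th_def XY _ eta_bd[OF e] T3]) (use e EE_nonneg in simp)
  have "2 * (pp v - pp vs) * (phi \<bullet> F e v) + th * (2 * ((qq v - qq vs) \<bullet> qd e v)) = 2 * T"
    by (simp add: T_def x_def y_def p_def ps_def q_def qs_def algebra_simps)
  also have "\<dots> \<le> - kap * (X^2 + th * Y^2)" using fin by (simp add: kap_def)
  also have "\<dots> = - kap * ((pp v - pp vs)^2 + th * (norm (qq v - qq vs))^2)"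
    by (simp add: X_def Y_def x_def y_def p_def ps_def q_def qs_def power2_abs)
  finally show ?thesis .
qed

end


lemma at_within_nonneg: "(t::real) > 0 \<Longrightarrow> at t within {0..} = at t"
  by (rule at_within_interior) simp

lemma der_cont_on:
  assumes "\<And>t. t \<ge> 0 \<Longrightarrow> (f has_real_derivative f' t) (at t within {0..})" "0 \<le> t0"
  shows "continuous_on {t0..t1} f"
proof -
  have "continuous_on {0..} f"
    using assms(1) DERIV_continuous continuous_on_eq_continuous_within by (metis atLeast_iff)
  then show ?thesis by (rule continuous_on_subset) (use assms(2) in auto)
qed

lemma mono_min:
  fixes f f' :: "real \<Rightarrow> real"
  assumes der: "\<And>t. t \<ge> 0 \<Longrightarrow> (f has_real_derivative f' t) (at t within {0..})"
    and pos: "\<And>t. t \<ge> t0 \<Longrightarrow> f t < M \<Longrightarrow> f' t \<ge> 0"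
    and t0: "0 \<le> t0" "t0 \<le> t1"
  shows "f t1 \<ge> min (f t0) M"
proof -
  define m' where "m' = min (f t0) M"
  have cont: "continuous_on {t0..t1} f" by (rule der_cont_on[OF der t0(1)])
  define S where "S = {t0..t1} \<inter> f -` {m'..}"
  have "closed S" unfolding S_def by (rule continuous_closed_preimage[OF cont]) auto
  moreover have "bounded S" unfolding S_def by (rule bounded_subset[of "{t0..t1}"]) auto
  ultimately have cS: "compact S" by (simp add: compact_eq_bounded_closed)
  have t0S: "t0 \<in> S" using t0 by (simp add: S_def m'_def)
  then obtain s where s: "s \<in> S" "\<forall>y\<in>S. y \<le> s" using compact_attains_sup[OF cS] by blast
  show ?thesis
  proof (cases "s = t1")
    case True then show ?thesis using s by (simp add: S_def m'_def)
  next
    case False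
    then have st: "s < t1" "t0 \<le> s" using s by (auto simp: S_def)
    have "f s \<le> f t1"
    proof (rule DERIV_nonneg_imp_increasing_open[OF less_imp_le[OF st(1)]])
      fix x assume x: "s < x" "x < t1"
      then have "x \<notin> S" using s by force
      then have "f x < m'" using x st by (auto simp: S_def)
      then have "f' x \<ge> 0" using pos[of x] x st by (auto simp: m'_def)
      moreover have "(f has_real_derivative f' x) (at x)"
        using der[of x] at_within_nonneg[of x] x st t0 by auto
      ultimately show "\<exists>y. (f has_real_derivative y) (at x) \<and> 0 \<le> y" by blast
    next
      show "continuous_on {s..t1} f" by (rule continuous_on_subset[OF cont]) (use st in auto)
    qed
    moreover have "f s \<ge> m'" using s by (simp add: S_def)
    ultimately show ?thesis by (simp add: m'_def)
  qed
qed

lemma eventually_ge: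
  fixes f f' :: "real \<Rightarrow> real"
  assumes der: "\<And>t. t \<ge> 0 \<Longrightarrow> (f has_real_derivative f' t) (at t within {0..})"
    and d: "d > 0" and pos: "\<And>t. t \<ge> 0 \<Longrightarrow> f t < M \<Longrightarrow> f' t \<ge> d"
  shows "\<exists>T\<ge>0. \<forall>t\<ge>T. f t \<ge> M"
proof -
  have "\<exists>T0\<ge>0. f T0 \<ge> M"
  proof (rule ccontr)
    assume neg: "\<not> ?thesis"
    have lt: "\<forall>t\<ge>0. f t < M"
    proof (intro allI impI)
      fix t :: real assume "t \<ge> 0"
      then show "f t < M" using neg by (meson not_le)
    qed
    define t where "t = (M - f 0) / d + 1"
    have tpos: "t > 0" using lt d by (simp add: t_def add_pos_nonneg)
    define g where "g = (\<lambda>s. f s - d * s)"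
    have gder: "(g has_real_derivative (f' s - d)) (at s within {0..})" if "s \<ge> 0" for s
      unfolding g_def using der[OF that] by (auto intro!: derivative_eq_intros)
    have "g 0 \<le> g t"
    proof (rule DERIV_nonneg_imp_increasing_open[OF less_imp_le[OF tpos]])
      fix x assume x: "0 < x" "x < t"
      have "(g has_real_derivative (f' x - d)) (at x)"
        using gder[of x] at_within_nonneg[of x] x by auto
      moreover have "f' x - d \<ge> 0" using pos[of x] lt x by auto
      ultimately show "\<exists>y. (g has_real_derivative y) (at x) \<and> 0 \<le> y" by blast
    next
      show "continuous_on {0..t} g" by (rule der_cont_on[OF gder]) auto
    qed
    then have "f t \<ge> f 0 + d * t" by (simp add: g_def)
    moreover have "f 0 + d * t = M + d" using d by (simp add: t_def field_simps)
    ultimately have "f t \<ge> M + d" by simp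
    moreover have "f t < M" using lt tpos by simp
    ultimately show False using d by linarith
  qed
  then obtain T0 where T0: "T0 \<ge> 0" "f T0 \<ge> M" by blast
  have "f t \<ge> M" if "t \<ge> T0" for t
  proof -
    have "f t \<ge> min (f T0) M"
      by (rule mono_min[OF der _ T0(1) that]) (use pos d T0 in \<open>auto intro: less_imp_le order_trans\<close>)
    then show ?thesis using T0 by simp
  qed
  then show ?thesis using T0 by blast
qed

lemma negsq_deriv: "((\<lambda>x::real. (min x 0)^2) has_real_derivative 2 * min x 0) (at x)"
proof (cases "x < 0")
  case True
  have "((\<lambda>y::real. y^2) has_real_derivative 2 * x) (at x)"
    by (auto intro!: derivative_eq_intros)
  then have "((\<lambda>y::real. (min y 0)^2) has_real_derivative 2 * x) (at x)"
    by (rule has_field_derivative_transform_within_open[of _ _ _ "{..<0}"]) (use True in auto)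
  moreover have "2 * min x 0 = 2 * x" using True by simp
  ultimately show ?thesis by simp
next
  case False
  show ?thesis
  proof (cases "x > 0")
    case True
    have "((\<lambda>y::real. 0) has_real_derivative 0) (at x)" by simp
    then have "((\<lambda>y::real. (min y 0)^2) has_real_derivative 0) (at x)"
      by (rule has_field_derivative_transform_within_open[of _ _ _ "{0<..}"]) (use True in auto)
    then show ?thesis using True by simp
  next
    case False
    with \<open>\<not> x < 0\<close> have x0: "x = 0" by simp
    have "\<exists>g. (\<forall>z. (min z 0)^2 - (min x 0)^2 = g z * (z - x)) \<and> isCont g x \<and> g x = 2 * min x 0"
    proof -
      have c: "isCont (\<lambda>z::real. min z 0) x" by (intro continuous_intros)
      show ?thesis by (rule exI[of _ "\<lambda>z. min z 0"]) (use c in \<open>auto simp: x0 power2_eq_square min_def\<close>)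
    qed
    then show ?thesis using CARAT_DERIV by blast
  qed
qed

lemma comp_deriv:
  assumes "(v has_vector_derivative w) (at t within s)"
  shows "((\<lambda>t. v t $ i) has_real_derivative (w $ i)) (at t within s)"
  using bounded_linear.has_vector_derivative[OF bounded_linear_vec_nth assms]
  by (simp add: has_real_derivative_iff_has_vector_derivative)



lemma min0_self: "min (x::real) 0 * x = (min x 0)^2"
  by (simp add: min_def power2_eq_square)

lemma min0_cross: "min (x::real) 0 * y \<le> min x 0 * min y 0"
  by (cases "x \<le> 0"; cases "y \<le> 0") (auto simp: min_def mult_le_0_iff mult_left_mono_neg)

lemma cross_sq: "(x::real) * y \<le> x^2 + y^2"
proof -
  have "2 * (x * y) \<le> x^2 + y^2" using sum_squares_bound[of x y] by (simp add: mult.assoc)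
  then show ?thesis using zero_le_power2[of x] zero_le_power2[of y] by linarith
qed

context sysloc begin

lemma F_comp: "F e v $ i = (r$i - (\<Sum>j\<in>UNIV. mu$i$j) - (alpha v + e * psi i v) / K) * v$i + (\<Sum>j\<in>UNIV. mu$i$j * v$j)"
  by (simp add: F_def sys_rhs_def algebra_simps sum_subtractf sum_distrib_left sum_distrib_right)

lemma sol_nonneg:
  assumes sol: "\<And>t. t \<ge> 0 \<Longrightarrow> (v has_vector_derivative F e (v t)) (at t within {0..})"
    and v0: "nn (v 0)" and t: "t \<ge> 0"
  shows "nn (v t)"
proof (cases "t = 0")
  case True then show ?thesis using v0 by simp
next
  case False
  then have tpos: "t > 0" using t by simp
  have cv: "continuous_on {0..} v"
    using sol has_vector_derivative_continuous continuous_on_eq_continuous_within by (metis atLeast_iff)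
  have cvt: "continuous_on {0..t} v" by (rule continuous_on_subset[OF cv]) auto
  define cf where "cf = (\<lambda>i s. r$i - (\<Sum>j\<in>UNIV. mu$i$j) - (alpha (v s) + e * psi i (v s)) / K)"
  have ccont: "continuous_on {0..t} (\<lambda>s. \<Sum>i\<in>UNIV. \<bar>cf i s\<bar>)"
    unfolding cf_def
    using K_pos by (intro continuous_intros continuous_on_compose2[OF alpha_cont cvt] continuous_on_compose2[OF psi_cont cvt]) auto
  have "compact ((\<lambda>s. \<Sum>i\<in>UNIV. \<bar>cf i s\<bar>) ` {0..t})"
    by (rule compact_continuous_image[OF ccont compact_Icc])
  then obtain C where C: "C > 0" "\<forall>z\<in>(\<lambda>s. \<Sum>i\<in>UNIV. \<bar>cf i s\<bar>) ` {0..t}. norm z \<le> C"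
    using compact_imp_bounded bounded_pos by metis
  have Cb: "\<bar>cf i s\<bar> \<le> C" if "s \<in> {0..t}" for i s
  proof -
    have "\<bar>cf i s\<bar> \<le> (\<Sum>i\<in>UNIV. \<bar>cf i s\<bar>)" by (rule member_le_sum) auto
    also have "\<dots> \<le> C" using C(2) that by force
    finally show ?thesis .
  qed
  define Mu where "Mu = (\<Sum>i\<in>UNIV. \<Sum>j\<in>UNIV. mu$i$j)"
  have muMu: "mu$i$j \<le> Mu" for i j
  proof -
    have "mu$i$j \<le> (\<Sum>j\<in>UNIV. mu$i$j)" by (rule member_le_sum) (auto simp: mu_nonneg)
    also have "\<dots> \<le> Mu" unfolding Mu_def by (rule member_le_sum) (auto simp: mu_nonneg sum_nonneg)
    finally show ?thesis .
  qed
  have Mu0: "Mu \<ge> 0" unfolding Mu_def by (simp add: mu_nonneg sum_nonneg)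
  define N where "N = real CARD('n)"
  define L where "L = 2 * C + 4 * N * Mu"
  define n where "n = (\<lambda>i s. min (v s $ i) 0)"
  define S where "S = (\<lambda>s. \<Sum>i\<in>UNIV. (n i s)^2)"
  define D where "D = (\<lambda>s. \<Sum>i\<in>UNIV. 2 * n i s * F e (v s) $ i)"
  have Sder: "(S has_real_derivative D s) (at s within {0..})" if "s \<ge> 0" for s
  proof -
    have "((\<lambda>s. (n i s)^2) has_real_derivative (2 * n i s * F e (v s) $ i)) (at s within {0..})" for i
      unfolding n_def using DERIV_chain2[OF negsq_deriv comp_deriv[OF sol[OF that]]] by simp
    then show ?thesis unfolding S_def D_def has_real_derivative_iff_has_vector_derivative
      by (intro has_vector_derivative_sum) auto
  qed
  have Dbd: "D s \<le> L * S s" if "s \<in> {0..t}" for s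
  proof -
    have tm: "n i s * F e (v s) $ i \<le> C * (n i s)^2 + (\<Sum>j\<in>UNIV. Mu * ((n i s)^2 + (n j s)^2))" for i
    proof -
      have "n i s * F e (v s) $ i = cf i s * (n i s * v s $ i) + (\<Sum>j\<in>UNIV. mu$i$j * (n i s * v s $ j))"
        unfolding F_comp cf_def by (simp add: algebra_simps sum_distrib_left)
      also have "\<dots> \<le> C * (n i s)^2 + (\<Sum>j\<in>UNIV. Mu * ((n i s)^2 + (n j s)^2))"
      proof (rule add_mono)
        have "cf i s * (n i s * v s $ i) = cf i s * (n i s)^2" by (simp add: n_def min0_self)
        also have "\<dots> \<le> \<bar>cf i s\<bar> * (n i s)^2" by (intro mult_right_mono) auto
        also have "\<dots> \<le> C * (n i s)^2" using Cb[OF that] by (intro mult_right_mono) auto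
        finally show "cf i s * (n i s * v s $ i) \<le> C * (n i s)^2" .
      next
        show "(\<Sum>j\<in>UNIV. mu$i$j * (n i s * v s $ j)) \<le> (\<Sum>j\<in>UNIV. Mu * ((n i s)^2 + (n j s)^2))"
        proof (rule sum_mono)
          fix j
          have "mu$i$j * (n i s * v s $ j) \<le> mu$i$j * (n i s * n j s)"
            using mu_nonneg min0_cross by (simp add: n_def mult_left_mono)
          also have "\<dots> \<le> mu$i$j * ((n i s)^2 + (n j s)^2)"
            using mu_nonneg cross_sq by (simp add: mult_left_mono)
          also have "\<dots> \<le> Mu * ((n i s)^2 + (n j s)^2)"
            using muMu by (intro mult_right_mono) auto
          finally show "mu$i$j * (n i s * v s $ j) \<le> Mu * ((n i s)^2 + (n j s)^2)" .
        qed
      qed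
      finally show ?thesis .
    qed
    have "D s \<le> (\<Sum>i\<in>UNIV. 2 * (C * (n i s)^2 + (\<Sum>j\<in>UNIV. Mu * ((n i s)^2 + (n j s)^2))))"
      unfolding D_def
    proof (rule sum_mono)
      fix i show "2 * n i s * F e (v s) $ i \<le> 2 * (C * (n i s)^2 + (\<Sum>j\<in>UNIV. Mu * ((n i s)^2 + (n j s)^2)))"
        using mult_left_mono[OF tm[of i], of 2] by (simp add: mult.assoc)
    qed
    also have "\<dots> = 2 * C * S s + 2 * Mu * (N * S s + N * S s)"
      by (simp add: S_def N_def sum.distrib sum_distrib_left algebra_simps sum_distrib_right)
    also have "\<dots> = L * S s" by (simp add: L_def algebra_simps)
    finally show ?thesis .
  qed
  define W where "W = (\<lambda>s. exp (- L * s) * S s)"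
  have Wder: "(W has_real_derivative exp (- L * s) * (D s - L * S s)) (at s within {0..})" if "s \<ge> 0" for s
    unfolding W_def using Sder[OF that] by (auto intro!: derivative_eq_intros simp: algebra_simps)
  have "W t \<le> W 0"
  proof (rule DERIV_nonpos_imp_decreasing_open[OF t])
    fix x assume x: "0 < x" "x < t"
    have "(W has_real_derivative exp (- L * x) * (D x - L * S x)) (at x)"
      using Wder[of x] at_within_nonneg[of x] x by auto
    moreover have "exp (- L * x) * (D x - L * S x) \<le> 0"
      using Dbd[of x] x by (simp add: mult_nonneg_nonpos)
    ultimately show "\<exists>y. (W has_real_derivative y) (at x) \<and> y \<le> 0" by blast
  next
    show "continuous_on {0..t} W" by (rule der_cont_on[OF Wder]) auto
  qed
  moreover have "W 0 = 0" using v0 by (simp add: W_def S_def n_def nn_def)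
  moreover have "S t \<ge> 0" by (simp add: S_def sum_nonneg)
  ultimately have "S t = 0" by (simp add: W_def mult_le_0_iff)
  then have "\<forall>i\<in>UNIV. (n i t)^2 = 0" unfolding S_def by (subst sum_nonneg_eq_0_iff[symmetric]) auto
  then show ?thesis by (simp add: nn_def n_def) (metis min.absorb_iff2 min_def)
qed

end


lemma exp_decay: "(k::real) > 0 \<Longrightarrow> ((\<lambda>t. c * exp (- k * t)) \<longlongrightarrow> 0) at_top"
proof -
  assume k: "k > 0"
  have "filterlim (\<lambda>t::real. - k * t) at_bot at_top"
    by (rule filterlim_tendsto_neg_mult_at_bot[OF tendsto_const _ filterlim_ident]) (use k in simp)
  then have "((\<lambda>t. exp (- k * t)) \<longlongrightarrow> 0) at_top"
    using filterlim_compose[OF exp_at_bot] by blast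
  then show ?thesis using tendsto_mult_right_zero by blast
qed

context sysloc2 begin

lemma P_der:
  assumes "(v has_vector_derivative F e (v t)) (at t within s)"
  shows "((\<lambda>t. phi \<bullet> v t) has_real_derivative (phi \<bullet> F e (v t))) (at t within s)"
  using bounded_linear.has_vector_derivative[OF bounded_linear_inner_right assms]
  by (simp add: has_real_derivative_iff_has_vector_derivative)

lemma converge:
  assumes e: "0 \<le> e" "e \<le> eps0"
    and vs: "\<forall>i. vs$i > 0" "F e vs = 0"
    and sol: "\<And>t. t \<ge> 0 \<Longrightarrow> (v has_vector_derivative F e (v t)) (at t within {0..})"
    and v0: "nn (v 0)" "v 0 \<noteq> 0"
  shows "(v \<longlongrightarrow> vs) at_top"
proof -
  have e1: "e \<le> eps1" using e eps0_le by linarith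
  have nnv: "nn (v t)" if "t \<ge> 0" for t using sol_nonneg[OF sol v0(1) that] .
  define P where "P = (\<lambda>t. phi \<bullet> v t)"
  define P' where "P' = (\<lambda>t. phi \<bullet> F e (v t))"
  have Pder: "(P has_real_derivative P' t) (at t within {0..})" if "t \<ge> 0" for t
    unfolding P_def P'_def by (rule P_der[OF sol[OF that]])
  have P0: "P 0 > 0" using p_pos[OF v0] by (simp add: P_def)
  define a0 where "a0 = min (P 0) a"
  have a0pos: "a0 > 0" using P0 a_pos by (simp add: a0_def)
  have Pnn: "P t \<ge> 0" if "t \<ge> 0" for t using p_nonneg[OF nnv[OF that]] by (simp add: P_def)
  have lowder: "P' t \<ge> (lam / 2) * P t" if "t \<ge> 0" "P t < a" for t
    using p_low[OF e(1) e1 nnv[OF that(1)]] that by (simp add: P_def P'_def)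
  have Pa0: "P t \<ge> a0" if "t \<ge> 0" for t
  proof -
    have "P t \<ge> min (P 0) a"
    proof (rule mono_min[OF Pder _ order_refl that])
      fix s assume "s \<ge> 0" "P s < a"
      then show "P' s \<ge> 0" using lowder[of s] Pnn[of s] lam_pos by (meson mult_nonneg_nonneg half_gt_zero less_imp_le order_trans)
    qed
    then show ?thesis by (simp add: a0_def)
  qed
  obtain T1 where T1: "T1 \<ge> 0" "\<forall>t\<ge>T1. P t \<ge> a"
  proof -
    have "\<exists>T\<ge>0. \<forall>t\<ge>T. P t \<ge> a"
    proof (rule eventually_ge[OF Pder, of "(lam / 2) * a0"])
      show "0 < lam / 2 * a0" using lam_pos a0pos by simp
    next
      fix t :: real assume "t \<ge> 0" "P t < a"
      then show "lam / 2 * a0 \<le> P' t" using lowder[of t] Pa0[of t] lam_pos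
        by (meson half_gt_zero less_imp_le mult_left_mono order_trans)
    qed
    then show ?thesis using that by blast
  qed
  obtain T2 where T2: "T2 \<ge> 0" "\<forall>t\<ge>T2. P t \<le> b"
  proof -
    have "\<exists>T\<ge>0. \<forall>t\<ge>T. - P t \<ge> - b"
    proof (rule eventually_ge[of "\<lambda>t. - P t" "\<lambda>t. - P' t" "lam / 2 * b"])
      fix t :: real assume "t \<ge> 0" then show "((\<lambda>t. - P t) has_real_derivative - P' t) (at t within {0..})"
        using Pder[of t] by (auto intro!: derivative_eq_intros)
    next
      show "0 < lam / 2 * b" using lam_pos b_ge1 by simp
    next
      fix t :: real assume t: "t \<ge> 0" "- P t < - b"
      have "P' t \<le> - (lam / 2) * P t"
        using p_high[OF e(1) e1 nnv[OF t(1)]] t by (simp add: P_def P'_def)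
      moreover have "(lam / 2) * b \<le> (lam / 2) * P t" using t lam_pos by simp
      ultimately show "lam / 2 * b \<le> - P' t" by simp
    qed
    then show ?thesis using that by fastforce
  qed
  define T where "T = max T1 T2"
  have Tab: "P t \<in> {a..b}" if "t \<ge> T" for t using T1 T2 that by (auto simp: T_def)
  have T0: "T \<ge> 0" using T1 by (simp add: T_def)
  define ps where "ps = pp vs"
  define qs where "qs = qq vs"
  define Q where "Q = (\<lambda>t. (1 / P t) *\<^sub>R v t)"
  define V where "V = (\<lambda>t. (P t - ps)^2 + th * ((Q t - qs) \<bullet> (Q t - qs)))"
  define V' where "V' = (\<lambda>t. 2 * (P t - ps) * P' t + th * (2 * ((Q t - qs) \<bullet> qd e (v t))))"
  have Vder: "(V has_real_derivative V' t) (at t within {0..})" if "t \<ge> T" for t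
  proof -
    have t0: "t \<ge> 0" using that T0 by simp
    have Ppos: "P t > 0" using Tab[OF that] a_pos by simp
    have Qder: "(Q has_vector_derivative qd e (v t)) (at t within {0..})"
    proof -
      have "((\<lambda>t. 1 / P t) has_real_derivative (- P' t / (P t)^2)) (at t within {0..})"
        using Pder[OF t0] Ppos by (auto intro!: derivative_eq_intros simp: power2_eq_square)
      from has_vector_derivative_scaleR[OF this sol[OF t0]]
      have "(Q has_vector_derivative ((1 / P t) *\<^sub>R F e (v t) + (- P' t / (P t)^2) *\<^sub>R v t)) (at t within {0..})"
        unfolding Q_def .
      moreover have "(1 / P t) *\<^sub>R F e (v t) + (- P' t / (P t)^2) *\<^sub>R v t = qd e (v t)"
        by (simp add: qd_def pp_def P_def P'_def algebra_simps)
      ultimately show ?thesis by simp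
    qed
    have Qd: "((\<lambda>t. Q t - qs) has_vector_derivative qd e (v t)) (at t within {0..})"
      using Qder by (auto intro!: derivative_eq_intros)
    have "((\<lambda>t. (Q t - qs) \<bullet> (Q t - qs)) has_vector_derivative
          ((Q t - qs) \<bullet> qd e (v t) + qd e (v t) \<bullet> (Q t - qs))) (at t within {0..})"
      by (rule bounded_bilinear.has_vector_derivative[OF bounded_bilinear_inner Qd Qd])
    then have Nd: "((\<lambda>t. (Q t - qs) \<bullet> (Q t - qs)) has_real_derivative (2 * ((Q t - qs) \<bullet> qd e (v t)))) (at t within {0..})"
      by (simp add: has_real_derivative_iff_has_vector_derivative inner_commute)
    have Pd2: "((\<lambda>t. (P t - ps)^2) has_real_derivative 2 * (P t - ps) * P' t) (at t within {0..})"
      using Pder[OF t0] by (auto intro!: derivative_eq_intros)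
    show ?thesis unfolding V_def V'_def
      using DERIV_add[OF Pd2 DERIV_cmult[OF Nd, of th]] by simp
  qed
  have Vineq: "V' t \<le> - kap * V t" if "t \<ge> T" for t
  proof -
    have t0: "t \<ge> 0" using that T0 by simp
    have Ppos: "P t > 0" using Tab[OF that] a_pos by simp
    have "pp (v t) \<in> {a..b}" using Tab[OF that] by (simp add: P_def pp_def)
    from state_ineq[OF e nnv[OF t0] this vs]
    show ?thesis
      by (simp add: V'_def V_def P_def P'_def ps_def qs_def Q_def qq_def pp_def power2_norm_eq_inner)
  qed
  define W where "W = (\<lambda>t. exp (kap * t) * V t)"
  have Wdec: "W t \<le> W T" if "t \<ge> T" for t
  proof (rule DERIV_nonpos_imp_decreasing_open[OF that])
    fix x assume x: "T < x" "x < t"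
    have "(W has_real_derivative exp (kap * x) * (kap * V x + V' x)) (at x within {0..})"
      unfolding W_def using Vder[of x] x by (auto intro!: derivative_eq_intros simp: algebra_simps)
    moreover have "at x within {0..} = at x" using at_within_nonneg[of x] x T0 by simp
    moreover have "exp (kap * x) * (kap * V x + V' x) \<le> 0"
      using Vineq[of x] x by (simp add: mult_nonneg_nonpos)
    ultimately show "\<exists>y. (W has_real_derivative y) (at x) \<and> y \<le> 0" by auto
  next
    have "continuous_on {T..t} V" unfolding continuous_on_eq_continuous_within
    proof
      fix x assume "x \<in> {T..t}"
      then have "x \<ge> T" by simp
      from DERIV_continuous[OF Vder[OF this]] have "continuous (at x within {0..}) V" .
      then show "continuous (at x within {T..t}) V" by (rule continuous_within_subset) (use T0 in auto)
    qed
    then show "continuous_on {T..t} W" unfolding W_def by (intro continuous_intros)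
  qed
  have Vnn: "V t \<ge> 0" for t using th_ge1 by (simp add: V_def)
  have Vbd: "V t \<le> W T * exp (- kap * t)" if "t \<ge> T" for t
  proof -
    have "exp (kap * t) * V t \<le> W T" using Wdec[OF that] by (simp add: W_def)
    then have "V t \<le> W T / exp (kap * t)" by (simp add: le_divide_eq mult.commute)
    then show ?thesis by (simp add: exp_minus divide_inverse)
  qed
  have V0: "(V \<longlongrightarrow> 0) at_top"
  proof (rule Lim_null_comparison[OF _ exp_decay[OF kap_pos, of "W T"]])
    show "\<forall>\<^sub>F t in at_top. norm (V t) \<le> W T * exp (- kap * t)"
      using Vbd Vnn by (auto simp: eventually_at_top_linorder intro!: exI[of _ T])
  qed
  have sV0: "((\<lambda>t. (Qc + b) * sqrt (V t)) \<longlongrightarrow> 0) at_top"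
  proof -
    have "((\<lambda>t. sqrt (V t)) \<longlongrightarrow> 0) at_top" using tendsto_real_sqrt[OF V0] by simp
    then show ?thesis by (rule tendsto_mult_right_zero)
  qed
  have psab: "ps \<in> {a..b}" using stat_range[OF e(1) e1 vs] by (simp add: ps_def pp_def)
  have vsq: "vs = ps *\<^sub>R qs" using v_eq[of vs] psab a_pos by (simp add: ps_def qs_def)
  have bnd: "norm (v t - vs) \<le> (Qc + b) * sqrt (V t)" if "t \<ge> T" for t
  proof -
    have Ppos: "P t > 0" using Tab[OF that] a_pos by simp
    have vq: "v t = P t *\<^sub>R Q t" using Ppos by (simp add: Q_def)
    have QS: "Q t \<in> Simp" using qq_Simp[of "v t"] nnv[of t] Ppos that T0 by (simp add: Q_def qq_def pp_def P_def)
    have "v t - vs = (P t - ps) *\<^sub>R Q t + ps *\<^sub>R (Q t - qs)" using vq vsq by (simp add: algebra_simps)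
    then have "norm (v t - vs) \<le> \<bar>P t - ps\<bar> * norm (Q t) + ps * norm (Q t - qs)"
      using norm_triangle_ineq[of "(P t - ps) *\<^sub>R Q t" "ps *\<^sub>R (Q t - qs)"] psab a_pos by simp
    also have "\<dots> \<le> sqrt (V t) * Qc + b * sqrt (V t)"
    proof (rule add_mono)
      have "\<bar>P t - ps\<bar> = sqrt ((P t - ps)^2)" by simp
      also have "\<dots> \<le> sqrt (V t)" using th_ge1 by (intro real_sqrt_le_mono) (simp add: V_def)
      finally show "\<bar>P t - ps\<bar> * norm (Q t) \<le> sqrt (V t) * Qc"
        using Simp_norm[OF QS] Vnn[of t] by (intro mult_mono) auto
    next
      have "norm (Q t - qs) = sqrt ((Q t - qs) \<bullet> (Q t - qs))" by (simp add: norm_eq_sqrt_inner)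
      also have "\<dots> \<le> sqrt (V t)"
      proof (intro real_sqrt_le_mono)
        have "(Q t - qs) \<bullet> (Q t - qs) \<le> th * ((Q t - qs) \<bullet> (Q t - qs))"
          using th_ge1 mult_right_mono[OF th_ge1 inner_ge_zero[of "Q t - qs"]] by simp
        moreover have "0 \<le> (P t - ps)^2" by simp
        ultimately show "(Q t - qs) \<bullet> (Q t - qs) \<le> V t" unfolding V_def by linarith
      qed
      finally show "ps * norm (Q t - qs) \<le> b * sqrt (V t)"
        using psab a_pos Vnn[of t] by (intro mult_mono) auto
    qed
    finally show ?thesis by (simp add: algebra_simps)
  qed
  have "((\<lambda>t. v t - vs) \<longlongrightarrow> 0) at_top"
  proof (rule Lim_null_comparison[OF _ sV0])
    show "\<forall>\<^sub>F t in at_top. norm (v t - vs) \<le> (Qc + b) * sqrt (V t)"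
      using bnd by (auto simp: eventually_at_top_linorder intro!: exI[of _ T])
  qed
  then show ?thesis by (rule LIM_zero_cancel)
qed

end


theorem theorem1p4:
  fixes K :: real and r :: "real ^ 'n" and mu :: "real ^ 'n ^ 'n"
    and alpha :: "real ^ 'n \<Rightarrow> real" and psi :: "'n \<Rightarrow> real ^ 'n \<Rightarrow> real"
  assumes K_pos: "K > 0"
    and r_pos: "\<forall>i. r $ i > 0"
    and mu_nonneg: "\<forall>i j. mu $ i $ j \<ge> 0"
    and mu_sym: "\<forall>i j. mu $ i $ j = mu $ j $ i"
    and mu_irred: "irreducible_mat mu"
    and mu_rowsum: "\<forall>i. (\<Sum>j\<in>UNIV. mu $ i $ j) \<le> r $ i / 2"
    and alpha_C1: "\<exists>g. C1_grad alpha g \<and> (\<forall>x i. g x $ i > 0)"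
    and alpha_0: "alpha 0 = 0"
    and alpha_mono: "comp_mono alpha"
    and alpha_growth: "growth_bound alpha"
    and psi_C1: "\<forall>i. \<exists>g. C1_grad (psi i) g"
    and psi_bdd: "\<exists>B. \<forall>i x. \<bar>psi i x\<bar> \<le> B"
  shows "\<exists>\<epsilon>0>0. \<forall>\<epsilon>. 0 \<le> \<epsilon> \<and> \<epsilon> \<le> \<epsilon>0 \<longrightarrow>
    (let Psi = (\<lambda>i v. alpha v + \<epsilon> * psi i v) in
      (\<forall>i. locally_lipschitz (Psi i) \<and> Psi i 0 = 0 \<and> comp_mono (Psi i) \<and> growth_bound (Psi i))
      \<longrightarrow>
      (\<forall>vbar. (\<forall>i. vbar $ i > 0) \<and> sys_rhs r K mu Psi vbar = 0 \<longrightarrow>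
        (\<forall>v :: real \<Rightarrow> real ^ 'n.
           (\<forall>t\<ge>0. (v has_vector_derivative sys_rhs r K mu Psi (v t)) (at t within {0..}))
           \<and> (\<forall>i. v 0 $ i \<ge> 0) \<and> v 0 \<noteq> 0
           \<longrightarrow> (v \<longlongrightarrow> vbar) at_top)))"
proof -
  obtain ga where ga: "C1_grad alpha ga" "\<forall>x i. ga x $ i > 0" using alpha_C1 by blast
  obtain gpsi where gpsi: "\<And>i. C1_grad (psi i) (gpsi i)" using psi_C1 by metis
  obtain B where B: "\<forall>i x. \<bar>psi i x\<bar> \<le> B" using psi_bdd by blast
  obtain phi lam gap where pf: "\<forall>i. phi$i > 0" "norm phi = 1" "Dmat r mu *v phi = lam *\<^sub>R phi"
     "lam > 0" "gap > 0" "\<forall>x. x \<bullet> (Dmat r mu *v x) \<le> lam * (norm x)^2"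
     "\<forall>x. phi \<bullet> x = 0 \<longrightarrow> x \<bullet> (Dmat r mu *v x) \<le> (lam - gap) * (norm x)^2"
    using perron[OF mu_nonneg mu_sym mu_irred r_pos] by blast
  interpret S1: sysloc K r mu alpha ga psi gpsi B phi lam gap
  proof
    show "\<And>x. (alpha has_derivative (\<bullet>) (ga x)) (at x)" using ga(1) by (simp add: C1_grad_def)
    show "continuous_on UNIV ga" using ga(1) by (simp add: C1_grad_def)
    show "\<And>i x. (psi i has_derivative (\<bullet>) (gpsi i x)) (at x)" using gpsi by (simp add: C1_grad_def)
    show "\<And>i. continuous_on UNIV (gpsi i)" using gpsi by (simp add: C1_grad_def)
  qed (use K_pos r_pos mu_nonneg mu_sym ga(2) alpha_0 alpha_growth B pf in auto)
  obtain a where a: "a > 0" "a \<le> 1" "\<forall>v. nn v \<and> phi \<bullet> v < a \<longrightarrow> alpha v \<le> K * lam / 4"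
    using S1.exists_a by blast
  obtain b where b: "b \<ge> 1" "\<forall>v. nn v \<and> phi \<bullet> v \<ge> b \<longrightarrow> alpha v \<ge> 2 * K * lam"
    using S1.exists_b by blast
  obtain A where A: "A \<ge> 0" "\<forall>x\<in>cball 0 (b * S1.Qc). \<forall>y\<in>cball 0 (b * S1.Qc). \<bar>alpha x - alpha y\<bar> \<le> A * norm (x - y)"
    using S1.exists_A by blast
  obtain Lp where Lp: "Lp \<ge> 0" "\<forall>i. \<forall>x\<in>cball 0 (b * S1.Qc). \<forall>y\<in>cball 0 (b * S1.Qc). \<bar>psi i x - psi i y\<bar> \<le> Lp * norm (x - y)"
    using S1.exists_Lp by blast
  have "a \<le> b" using a b by simp
  then obtain m where m: "m > 0" "\<forall>p ps q. p \<in> {a..b} \<and> ps \<in> {a..b} \<and> q \<in> S1.Simp \<longrightarrow>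
           (alpha (p *\<^sub>R q) - alpha (ps *\<^sub>R q)) * (p - ps) \<ge> m * (p - ps)^2"
    using S1.exists_m by blast
  interpret S2: sysloc2 K r mu alpha ga psi gpsi B phi lam gap a b A Lp m
    by unfold_locales (use a b A Lp m in auto)
  show ?thesis
  proof (intro exI[of _ S2.eps0] conjI allI impI)
    show "S2.eps0 > 0" by (rule S2.eps0_pos)
  next
    fix e :: real assume e: "0 \<le> e \<and> e \<le> S2.eps0"
    show "let Psi = (\<lambda>i v. alpha v + e * psi i v) in
      (\<forall>i. locally_lipschitz (Psi i) \<and> Psi i 0 = 0 \<and> comp_mono (Psi i) \<and> growth_bound (Psi i))
      \<longrightarrow>
      (\<forall>vbar. (\<forall>i. vbar $ i > 0) \<and> sys_rhs r K mu Psi vbar = 0 \<longrightarrow>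
        (\<forall>v :: real \<Rightarrow> real ^ 'n.
           (\<forall>t\<ge>0. (v has_vector_derivative sys_rhs r K mu Psi (v t)) (at t within {0..}))
           \<and> (\<forall>i. v 0 $ i \<ge> 0) \<and> v 0 \<noteq> 0
           \<longrightarrow> (v \<longlongrightarrow> vbar) at_top))"
      unfolding Let_def
    proof (intro impI allI)
      fix vbar and v :: "real \<Rightarrow> real ^ 'n"
      assume vb: "(\<forall>i. vbar $ i > 0) \<and> sys_rhs r K mu (\<lambda>i v. alpha v + e * psi i v) vbar = 0"
        and vv: "(\<forall>t\<ge>0. (v has_vector_derivative sys_rhs r K mu (\<lambda>i v. alpha v + e * psi i v) (v t)) (at t within {0..}))
           \<and> (\<forall>i. v 0 $ i \<ge> 0) \<and> v 0 \<noteq> 0"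
      show "(v \<longlongrightarrow> vbar) at_top"
      proof (rule S2.converge)
        show "0 \<le> e" "e \<le> S2.eps0" using e by auto
        show "\<forall>i. vbar $ i > 0" using vb by auto
        show "S1.F e vbar = 0" using vb by (simp add: S1.F_def)
        show "\<And>t. t \<ge> 0 \<Longrightarrow> (v has_vector_derivative S1.F e (v t)) (at t within {0..})"
          using vv by (simp add: S1.F_def)
        show "nn (v 0)" using vv by (simp add: nn_def)
        show "v 0 \<noteq> 0" using vv by simp
      qed
    qed
  qed
qed


end
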